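(* For all $X, Y \subseteq \omega$, there exists an embedding $\mathcal{B}^X \hookrightarrow \mathcal{K}_1^Y$ if and only if $X'' \le_T Y$.
   Context: $X''$ denotes the double Turing jump of $X$. A pca is a set with a partial binary application operation containing distinct $\mathrm{s},\mathrm{k}$ with $\mathrm{k}ab\downarrow=a$, $\mathrm{s}ab\downarrow$, $\mathrm{s}abc\simeq(ac)(bc)$. An embedding of pcas is an injective map $f$ with: if $ab$ is defined then $f(a)f(b)$ is defined and equals $f(ab)$. $\mathcal{K}_1^Y$ is the pca on $\omega$ with $n\cdot m=\Phi^Y_n(m)$, the $n$-th partial $Y$-computable function applied to $m$. $\mathcal{B}^X$: elements are the partial $X$-computable functions $\omega\rightharpoonup\omega$, with $\varphi\cdot\psi$ the partial function $n\mapsto\Phi^{\varphi\oplus\psi}_{\varphi(0)}(n)$, where $\Phi_e$ is the $e$-th Turing functional, $(\varphi\oplus\psi)(2n)\simeq\varphi(n)$, $(\varphi\oplus\psi)(2n+1)\simeq\psi(n)$, and querying the oracle at an undefined point diverges. *)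

theory Defs
  imports Main "HOL-Library.Nat_Bijection"
begin

text \<open>Partial functions on the naturals; oracles are partial functions, a query
  at an undefined point diverges.\<close>

type_synonym pfun = "nat \<Rightarrow> nat option"

text \<open>Programs for unary partial recursive functionals (tuples coded by the
  Cantor pairing prod_encode).\<close>

datatype prog =
    Zero | Succ | Ident | Fst | Snd | Oracle
  | Pair prog prog | Comp prog prog | Rec prog prog | Mu prog

inductive eval :: "pfun \<Rightarrow> prog \<Rightarrow> nat \<Rightarrow> nat \<Rightarrow> bool" for \<alpha> :: pfun where
  ev_zero: "eval \<alpha> Zero x 0"
| ev_succ: "eval \<alpha> Succ x (Suc x)"
| ev_ident: "eval \<alpha> Ident x x"
| ev_fst: "eval \<alpha> Fst x (fst (prod_decode x))"
| ev_snd: "eval \<alpha> Snd x (snd (prod_decode x))"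
| ev_oracle: "\<alpha> x = Some v \<Longrightarrow> eval \<alpha> Oracle x v"
| ev_pair: "eval \<alpha> f x a \<Longrightarrow> eval \<alpha> g x b \<Longrightarrow> eval \<alpha> (Pair f g) x (prod_encode (a, b))"
| ev_comp: "eval \<alpha> g x y \<Longrightarrow> eval \<alpha> f y v \<Longrightarrow> eval \<alpha> (Comp f g) x v"
| ev_rec0: "eval \<alpha> f y v \<Longrightarrow> eval \<alpha> (Rec f g) (prod_encode (0, y)) v"
| ev_recS: "eval \<alpha> (Rec f g) (prod_encode (n, y)) w \<Longrightarrow>
            eval \<alpha> g (prod_encode (n, prod_encode (w, y))) v \<Longrightarrow>
            eval \<alpha> (Rec f g) (prod_encode (Suc n, y)) v"
| ev_mu: "eval \<alpha> f (prod_encode (n, x)) 0 \<Longrightarrow>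
          (\<forall>i<n. \<exists>v. v \<noteq> 0 \<and> eval \<alpha> f (prod_encode (i, x)) v) \<Longrightarrow>
          eval \<alpha> (Mu f) x n"

text \<open>An effective (surjective) numbering of programs.\<close>

lemma prod_decode_le: "prod_decode m = (a, b) \<Longrightarrow> a \<le> m \<and> b \<le> m"
  by (metis le_prod_encode_1 le_prod_encode_2 prod_decode_inverse)

function decode :: "nat \<Rightarrow> prog" where
  "decode n =
    (if n = 0 then Zero else if n = 1 then Succ else if n = 2 then Ident
     else if n = 3 then Fst else if n = 4 then Snd else if n = 5 then Oracle
     else (let m = (n - 6) div 4; k = (n - 6) mod 4 in
       if k = 0 then Pair (decode (fst (prod_decode m))) (decode (snd (prod_decode m)))
       else if k = 1 then Comp (decode (fst (prod_decode m))) (decode (snd (prod_decode m)))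
       else if k = 2 then Rec (decode (fst (prod_decode m))) (decode (snd (prod_decode m)))
       else Mu (decode m)))"
  by auto
lemma decode_term_aux:
  assumes "\<not> n < 6"
  shows "fst (prod_decode ((n - 6) div 4)) < n" "snd (prod_decode ((n - 6) div 4)) < n"
    "(n - 6) div 4 < n"
proof -
  have m: "(n - 6) div 4 < n" using assms by linarith
  show "(n - 6) div 4 < n" by (rule m)
  show "fst (prod_decode ((n - 6) div 4)) < n"
    using prod_decode_le[of "(n - 6) div 4"] m by (cases "prod_decode ((n - 6) div 4)") auto
  show "snd (prod_decode ((n - 6) div 4)) < n"
    using prod_decode_le[of "(n - 6) div 4"] m by (cases "prod_decode ((n - 6) div 4)") auto
qed

termination
  by (relation "measure id") (auto simp: Let_def intro: decode_term_aux)

definition Phi :: "pfun \<Rightarrow> nat \<Rightarrow> pfun" where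
  "Phi \<alpha> e x = (if \<exists>v. eval \<alpha> (decode e) x v then Some (THE v. eval \<alpha> (decode e) x v) else None)"

definition chi :: "nat set \<Rightarrow> pfun" where
  "chi X n = Some (if n \<in> X then 1 else 0)"

definition computable_in :: "pfun \<Rightarrow> nat set \<Rightarrow> bool" where
  "computable_in f X \<longleftrightarrow> (\<exists>e. f = Phi (chi X) e)"

definition turing_le :: "nat set \<Rightarrow> nat set \<Rightarrow> bool" (infix "\<le>\<^sub>T" 50) where
  "X \<le>\<^sub>T Y \<longleftrightarrow> computable_in (chi X) Y"

definition jump :: "nat set \<Rightarrow> nat set" where
  "jump X = {e. Phi (chi X) e e \<noteq> None}"

definition join :: "pfun \<Rightarrow> pfun \<Rightarrow> pfun" where
  "join \<phi> \<psi> n = (if even n then \<phi> (n div 2) else \<psi> (n div 2))"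

definition pca_embedding ::
  "'a set \<Rightarrow> ('a \<Rightarrow> 'a \<Rightarrow> 'a option) \<Rightarrow> 'b set \<Rightarrow> ('b \<Rightarrow> 'b \<Rightarrow> 'b option) \<Rightarrow> ('a \<Rightarrow> 'b) \<Rightarrow> bool" where
  "pca_embedding A appA B appB f \<longleftrightarrow>
     f ` A \<subseteq> B \<and> inj_on f A \<and>
     (\<forall>a\<in>A. \<forall>b\<in>A. \<forall>c. appA a b = Some c \<longrightarrow> appB (f a) (f b) = Some (f c))"

definition K1_carrier :: "nat set" where "K1_carrier = UNIV"

definition K1_app :: "nat set \<Rightarrow> nat \<Rightarrow> nat \<Rightarrow> nat option" where
  "K1_app Y n m = Phi (chi Y) n m"

definition B_carrier :: "nat set \<Rightarrow> pfun set" where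
  "B_carrier X = {\<phi>. computable_in \<phi> X}"

definition B_app :: "pfun \<Rightarrow> pfun \<Rightarrow> pfun option" where
  "B_app \<phi> \<psi> = Some (\<lambda>n. case \<phi> 0 of None \<Rightarrow> None | Some e \<Rightarrow> Phi (join \<phi> \<psi>) e n)"

end

theory Submission
  imports Defs
begin


definition pr :: "nat \<Rightarrow> nat \<Rightarrow> nat" where "pr a b = prod_encode (a, b)"
definition p1 :: "nat \<Rightarrow> nat" where "p1 x = fst (prod_decode x)"
definition p2 :: "nat \<Rightarrow> nat" where "p2 x = snd (prod_decode x)"

lemma p1_pr[simp]: "p1 (pr a b) = a" by (simp add: p1_def pr_def)
lemma p2_pr[simp]: "p2 (pr a b) = b" by (simp add: p2_def pr_def)
lemma pr_p12[simp]: "pr (p1 x) (p2 x) = x" by (simp add: pr_def p1_def p2_def)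
lemma pr_inj[simp]: "pr a b = pr c d \<longleftrightarrow> a = c \<and> b = d" by (simp add: pr_def prod_encode_eq)
lemma pr_00[simp]: "pr 0 0 = 0" by (simp add: pr_def prod_encode_def)
lemma pr_ge1: "a \<le> pr a b" by (simp add: pr_def le_prod_encode_1)
lemma pr_ge2: "b \<le> pr a b" by (simp add: pr_def le_prod_encode_2)
lemma p1_le: "p1 x \<le> x" by (metis pr_ge1 pr_p12)
lemma p2_le: "p2 x \<le> x" by (metis pr_ge2 pr_p12)
lemma pr_surj: "\<exists>a b. x = pr a b" by (metis pr_p12)

lemma ev_Zero[simp]: "eval \<alpha> Zero x v \<longleftrightarrow> v = 0" by (auto elim: eval.cases intro: eval.intros)
lemma ev_Succ[simp]: "eval \<alpha> Succ x v \<longleftrightarrow> v = Suc x" by (auto elim: eval.cases intro: eval.intros)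
lemma ev_Ident[simp]: "eval \<alpha> Ident x v \<longleftrightarrow> v = x" by (auto elim: eval.cases intro: eval.intros)
lemma ev_Fst[simp]: "eval \<alpha> Fst x v \<longleftrightarrow> v = p1 x" by (auto elim: eval.cases intro: eval.intros simp: p1_def)
lemma ev_Snd[simp]: "eval \<alpha> Snd x v \<longleftrightarrow> v = p2 x" by (auto elim: eval.cases intro: eval.intros simp: p2_def)
lemma ev_Oracle[simp]: "eval \<alpha> Oracle x v \<longleftrightarrow> \<alpha> x = Some v" by (auto elim: eval.cases intro: eval.intros)
lemma ev_Pair[simp]: "eval \<alpha> (Pair f g) x v \<longleftrightarrow> (\<exists>a b. v = pr a b \<and> eval \<alpha> f x a \<and> eval \<alpha> g x b)"
  apply (rule iffI)
   apply (erule eval.cases; simp add: pr_def; blast)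
  apply (clarsimp simp: pr_def)
  apply (erule (1) eval.ev_pair)
  done
lemma ev_Comp[simp]: "eval \<alpha> (Comp f g) x v \<longleftrightarrow> (\<exists>y. eval \<alpha> g x y \<and> eval \<alpha> f y v)"
  apply (rule iffI)
   apply (erule eval.cases; simp; blast)
  apply clarsimp
  apply (erule (1) eval.ev_comp)
  done
lemma ev_Rec0[simp]: "eval \<alpha> (Rec f g) (pr 0 y) v \<longleftrightarrow> eval \<alpha> f y v"
  apply (rule iffI)
   apply (erule eval.cases; simp add: pr_def prod_encode_eq)
  apply (simp add: pr_def eval.ev_rec0)
  done
lemma ev_RecS[simp]: "eval \<alpha> (Rec f g) (pr (Suc n) y) v \<longleftrightarrow>
   (\<exists>w. eval \<alpha> (Rec f g) (pr n y) w \<and> eval \<alpha> g (pr n (pr w y)) v)"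
  apply (rule iffI)
   apply (erule eval.cases; simp add: pr_def prod_encode_eq; blast)
  apply (clarsimp simp: pr_def)
  apply (erule (1) eval.ev_recS)
  done
lemma ev_Mu: "eval \<alpha> (Mu f) x n \<longleftrightarrow> eval \<alpha> f (pr n x) 0 \<and> (\<forall>i<n. \<exists>v. v \<noteq> 0 \<and> eval \<alpha> f (pr i x) v)"
  apply (rule iffI)
   apply (erule eval.cases; simp add: pr_def)
  apply (clarsimp simp: pr_def)
  apply (erule eval.ev_mu) apply blast
  done

lemma eval_det: "eval \<alpha> p x v \<Longrightarrow> eval \<alpha> p x w \<Longrightarrow> v = w"
proof (induction arbitrary: w rule: eval.induct)
  case (ev_pair f x a g b)
  from ev_pair.prems obtain a' b' where "w = pr a' b'" "eval \<alpha> f x a'" "eval \<alpha> g x b'" by auto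
  then show ?case using ev_pair.IH by (metis pr_def)
next
  case (ev_comp g x y f v)
  from ev_comp.prems obtain y' where "eval \<alpha> g x y'" "eval \<alpha> f y' w" by auto
  then show ?case using ev_comp.IH by metis
next
  case (ev_rec0 f y v g)
  from ev_rec0.prems have "eval \<alpha> f y w" by (simp add: pr_def[symmetric])
  then show ?case using ev_rec0.IH by metis
next
  case (ev_recS f g n y w' v)
  from ev_recS.prems obtain u where "eval \<alpha> (Rec f g) (pr n y) u" "eval \<alpha> g (pr n (pr u y)) w" by (auto simp: pr_def[symmetric])
  then show ?case using ev_recS.IH by (metis pr_def)
next
  case (ev_mu f n x)
  from ev_mu.prems have m0: "eval \<alpha> f (pr w x) 0" and mi: "\<forall>i<w. \<exists>v. v \<noteq> 0 \<and> eval \<alpha> f (pr i x) v"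
    by (auto simp: ev_Mu)
  show ?case
  proof (rule ccontr)
    assume "n \<noteq> w"
    then consider "n < w" | "w < n" by linarith
    then show False
    proof cases
      case 1
      then obtain v where "v \<noteq> 0" "eval \<alpha> f (pr n x) v" using mi by blast
      then show False using ev_mu.IH(1) by (metis pr_def) 
    next
      case 2
      then obtain v where "v \<noteq> 0" "eval \<alpha> f (pr w x) v" "\<And>u. eval \<alpha> f (pr w x) u \<Longrightarrow> v = u"
        using ev_mu.IH(2) by (metis pr_def)
      then show False using m0 by blast
    qed
  qed
next
  case (ev_oracle x v)
  then show ?case by simp
qed (simp_all add: p1_def p2_def)

lemma Phi_Some: "Phi \<alpha> e x = Some v \<longleftrightarrow> eval \<alpha> (decode e) x v"
proof
  assume "Phi \<alpha> e x = Some v"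
  then have ex: "\<exists>v. eval \<alpha> (decode e) x v" and "v = (THE v. eval \<alpha> (decode e) x v)"
    unfolding Phi_def by (auto split: if_splits)
  then show "eval \<alpha> (decode e) x v" using eval_det by (metis theI')
next
  assume h: "eval \<alpha> (decode e) x v"
  then have "(THE v. eval \<alpha> (decode e) x v) = v" using eval_det by blast
  then show "Phi \<alpha> e x = Some v" using h unfolding Phi_def by auto
qed

lemma Phi_None: "Phi \<alpha> e x = None \<longleftrightarrow> (\<forall>v. \<not> eval \<alpha> (decode e) x v)"
  unfolding Phi_def by auto


declare decode.simps[simp del]

lemma decode_small[simp]: "decode 0 = Zero" "decode 1 = Succ" "decode 2 = Ident"
  "decode 3 = Fst" "decode 4 = Snd" "decode 5 = Oracle"
  by (subst decode.simps; simp)+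

lemma decode_ge6: "\<not> e < 6 \<Longrightarrow> decode e =
   (if (e - 6) mod 4 = 0 then Pair (decode (p1 ((e-6) div 4))) (decode (p2 ((e-6) div 4)))
    else if (e - 6) mod 4 = 1 then Comp (decode (p1 ((e-6) div 4))) (decode (p2 ((e-6) div 4)))
    else if (e - 6) mod 4 = 2 then Rec (decode (p1 ((e-6) div 4))) (decode (p2 ((e-6) div 4)))
    else Mu (decode ((e-6) div 4)))"
  by (subst decode.simps) (simp add: Let_def p1_def p2_def)

lemma decode_k: assumes "k < 4"
  shows "decode (6 + 4 * m + k) =
   (if k = 0 then Pair (decode (p1 m)) (decode (p2 m))
    else if k = 1 then Comp (decode (p1 m)) (decode (p2 m))
    else if k = 2 then Rec (decode (p1 m)) (decode (p2 m))
    else Mu (decode m))"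
proof -
  have a: "6 + 4 * m + k - 6 = k + 4 * m" by simp
  have b: "(k + 4 * m) div 4 = m" "(k + 4 * m) mod 4 = k" using assms by simp_all
  show ?thesis
    apply (subst decode_ge6)
     apply simp
    apply (simp only: a b)
    done
qed

lemma decode_Pair[simp]: "decode (6 + 4 * m) = Pair (decode (p1 m)) (decode (p2 m))"
  using decode_k[of 0 m] by simp
lemma decode_Comp[simp]: "decode (7 + 4 * m) = Comp (decode (p1 m)) (decode (p2 m))"
  using decode_k[of 1 m] by (simp add: add.commute add.left_commute)
lemma decode_Rec[simp]: "decode (8 + 4 * m) = Rec (decode (p1 m)) (decode (p2 m))"
  using decode_k[of 2 m] by (simp add: add.commute add.left_commute)
lemma decode_Mu[simp]: "decode (9 + 4 * m) = Mu (decode m)"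
  using decode_k[of 3 m] by (simp add: add.commute add.left_commute)

lemma decode_Suc0[simp]: "decode (Suc 0) = Succ" using decode_small(2) by simp

primrec encode :: "prog \<Rightarrow> nat" where
  "encode Zero = 0" | "encode Succ = 1" | "encode Ident = 2" | "encode Fst = 3"
| "encode Snd = 4" | "encode Oracle = 5"
| "encode (Pair p q) = 6 + 4 * pr (encode p) (encode q)"
| "encode (Comp p q) = 7 + 4 * pr (encode p) (encode q)"
| "encode (Rec p q) = 8 + 4 * pr (encode p) (encode q)"
| "encode (Mu p) = 9 + 4 * encode p"

lemma decode_encode[simp]: "decode (encode p) = p"
  by (induction p) simp_all

lemma decode_surj: "\<exists>e. decode e = p" by (metis decode_encode)

section \<open>Computable function classes\<close>

type_synonym orc = "nat \<Rightarrow> nat"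

definition rc :: "(orc \<Rightarrow> nat \<Rightarrow> nat) \<Rightarrow> bool" where
  "rc h \<longleftrightarrow> (\<exists>p. \<forall>a x. eval (\<lambda>n. Some (a n)) p x (h a x))"

primrec constp :: "nat \<Rightarrow> prog" where
  "constp 0 = Zero" | "constp (Suc n) = Comp Succ (constp n)"

lemma ev_constp[simp]: "eval \<alpha> (constp n) x v \<longleftrightarrow> v = n"
  by (induction n arbitrary: v) auto

named_theorems rcI

lemma rc_id[rcI]: "rc (\<lambda>a x. x)" unfolding rc_def by (rule exI[of _ Ident]) simp
lemma rc_const[rcI]: "rc (\<lambda>a x. c)" unfolding rc_def by (rule exI[of _ "constp c"]) simp
lemma rc_comp: "rc g \<Longrightarrow> rc h \<Longrightarrow> rc (\<lambda>a x. g a (h a x))"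
  unfolding rc_def by (metis ev_Comp)
lemma rc_p1[rcI]: "rc h \<Longrightarrow> rc (\<lambda>a x. p1 (h a x))"
  unfolding rc_def by (metis ev_Comp ev_Fst)
lemma rc_p2[rcI]: "rc h \<Longrightarrow> rc (\<lambda>a x. p2 (h a x))"
  unfolding rc_def by (metis ev_Comp ev_Snd)
lemma rc_Suc[rcI]: "rc h \<Longrightarrow> rc (\<lambda>a x. Suc (h a x))"
  unfolding rc_def by (metis ev_Comp ev_Succ)
lemma rc_orc[rcI]: "rc h \<Longrightarrow> rc (\<lambda>a x. a (h a x))"
  unfolding rc_def by (metis ev_Comp ev_Oracle)
lemma rc_pr[rcI]: "rc g \<Longrightarrow> rc h \<Longrightarrow> rc (\<lambda>a x. pr (g a x) (h a x))"
  unfolding rc_def by (metis ev_Pair)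

primrec precf :: "(nat \<Rightarrow> nat) \<Rightarrow> (nat \<Rightarrow> nat) \<Rightarrow> nat \<Rightarrow> nat \<Rightarrow> nat" where
  "precf F G 0 y = F y"
| "precf F G (Suc n) y = G (pr n (pr (precf F G n y) y))"

lemma rc_prec: "rc F \<Longrightarrow> rc G \<Longrightarrow> rc (\<lambda>a x. precf (F a) (G a) (p1 x) (p2 x))"
proof -
  assume "rc F" "rc G"
  then obtain P Q where P: "\<And>a x. eval (\<lambda>n. Some (a n)) P x (F a x)" and Q: "\<And>a x. eval (\<lambda>n. Some (a n)) Q x (G a x)"
    unfolding rc_def by blast
  have "eval (\<lambda>n. Some (a n)) (Rec P Q) (pr n y) (precf (F a) (G a) n y)" for a n y
    by (induction n) (use P Q in auto)
  then have "eval (\<lambda>n. Some (a n)) (Rec P Q) x (precf (F a) (G a) (p1 x) (p2 x))" for a x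
    by (metis pr_p12)
  then show ?thesis unfolding rc_def by blast
qed

lemma rc_prec': "rc F \<Longrightarrow> rc G \<Longrightarrow> rc n \<Longrightarrow> rc y \<Longrightarrow> rc (\<lambda>a x. precf (F a) (G a) (n a x) (y a x))"
  using rc_comp[OF rc_prec rc_pr, of F G n y] by simp

lemma precf_add: "precf (\<lambda>y. y) (\<lambda>z. Suc (p1 (p2 z))) n y = n + y"
  by (induction n) auto
lemma rc_add[rcI]: assumes "rc g" "rc h" shows "rc (\<lambda>a x. g a x + h a x)"
proof -
  have "rc (\<lambda>a x. precf (\<lambda>y. y) (\<lambda>z. Suc (p1 (p2 z))) (g a x) (h a x))"
    by (rule rc_prec'[where F="\<lambda>a y. y" and G="\<lambda>a z. Suc (p1 (p2 z))"]) (intro rcI assms)+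
  then show ?thesis by (simp add: precf_add)
qed

lemma precf_pred: "precf (\<lambda>y. 0) (\<lambda>z. p1 z) n y = n - 1"
  by (induction n) auto
lemma rc_pred[rcI]: assumes "rc h" shows "rc (\<lambda>a x. h a x - 1)"
proof -
  have "rc (\<lambda>a x. precf (\<lambda>y. 0) (\<lambda>z. p1 z) (h a x) 0)"
    by (rule rc_prec'[where F="\<lambda>a y. 0" and G="\<lambda>a z. p1 z"]) (intro rcI assms)+
  then show ?thesis by (simp add: precf_pred)
qed

lemma rc_pred'[rcI]: assumes "rc h" shows "rc (\<lambda>a x. h a x - Suc 0)"
  using rc_pred[OF assms] by simp

lemma precf_sub: "precf (\<lambda>y. y) (\<lambda>z. p1 (p2 z) - Suc 0) n y = y - n"
  by (induction n) auto
lemma rc_sub[rcI]: assumes "rc g" "rc h" shows "rc (\<lambda>a x. g a x - h a x)"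
proof -
  have "rc (\<lambda>a x. precf (\<lambda>y. y) (\<lambda>z. p1 (p2 z) - Suc 0) (h a x) (g a x))"
    by (rule rc_prec'[where F="\<lambda>a y. y" and G="\<lambda>a z. p1 (p2 z) - Suc 0"]) (intro rcI assms)+
  then show ?thesis by (simp add: precf_sub)
qed

lemma precf_mult: "precf (\<lambda>y. 0) (\<lambda>z. p1 (p2 z) + p2 (p2 z)) n y = n * y"
  by (induction n) auto
lemma rc_mult[rcI]: assumes "rc g" "rc h" shows "rc (\<lambda>a x. g a x * h a x)"
proof -
  have "rc (\<lambda>a x. precf (\<lambda>y. 0) (\<lambda>z. p1 (p2 z) + p2 (p2 z)) (g a x) (h a x))"
    by (rule rc_prec'[where F="\<lambda>a y. 0" and G="\<lambda>a z. p1 (p2 z) + p2 (p2 z)"]) (intro rcI assms)+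
  then show ?thesis by (simp add: precf_mult)
qed

lemma precf_if: "precf p1 (\<lambda>z. p2 (p2 (p2 z))) c y = (if c = 0 then p1 y else p2 y)"
  by (cases c) auto
lemma rc_if0: assumes "rc c" "rc g" "rc h" shows "rc (\<lambda>a x. if c a x = 0 then g a x else h a x)"
proof -
  have "rc (\<lambda>a x. precf p1 (\<lambda>z. p2 (p2 (p2 z))) (c a x) (pr (g a x) (h a x)))"
    by (rule rc_prec'[where F="\<lambda>a. p1" and G="\<lambda>a z. p2 (p2 (p2 z))"]) (intro rcI assms)+
  moreover have "(\<lambda>a x. precf p1 (\<lambda>z. p2 (p2 (p2 z))) (c a x) (pr (g a x) (h a x))) =
     (\<lambda>a x. if c a x = 0 then g a x else h a x)" by (rule ext)+ (simp add: precf_if)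
  ultimately show ?thesis by simp
qed

definition rcp :: "(orc \<Rightarrow> nat \<Rightarrow> bool) \<Rightarrow> bool" where
  "rcp P \<longleftrightarrow> rc (\<lambda>a x. if P a x then 1 else 0)"

lemma rc_if[rcI]: assumes "rcp P" "rc g" "rc h" shows "rc (\<lambda>a x. if P a x then g a x else h a x)"
proof -
  have "rc (\<lambda>a x. if (if P a x then 1 else 0) = (0::nat) then h a x else g a x)"
    by (rule rc_if0) (use assms in \<open>auto simp: rcp_def\<close>)
  moreover have "(\<lambda>a x. if (if P a x then 1 else 0) = (0::nat) then h a x else g a x) =
     (\<lambda>a x. if P a x then g a x else h a x)" by (rule ext)+ auto
  ultimately show ?thesis by simp
qed

lemma rcp_zero: assumes "rc h" shows "rcp (\<lambda>a x. h a x = 0)"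
  unfolding rcp_def by (rule rc_if0) (intro rcI assms)+

lemma rcp_eq[rcI]: assumes "rc g" "rc h" shows "rcp (\<lambda>a x. g a x = h a x)"
proof -
  have "rcp (\<lambda>a x. (g a x - h a x) + (h a x - g a x) = 0)" by (rule rcp_zero) (intro rcI assms)+
  moreover have "(\<lambda>a x. (g a x - h a x) + (h a x - g a x) = 0) = (\<lambda>a x. g a x = h a x)" by (rule ext)+ auto
  ultimately show ?thesis by simp
qed

lemma rcp_not[rcI]: assumes "rcp P" shows "rcp (\<lambda>a x. \<not> P a x)"
proof -
  have "rc (\<lambda>a x. if P a x then 0 else 1)" by (rule rc_if) (intro rcI assms)+
  moreover have "(\<lambda>a x. if P a x then 0 else 1) = (\<lambda>a x. if \<not> P a x then 1 else (0::nat))" by (rule ext)+ auto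
  ultimately show ?thesis unfolding rcp_def by simp
qed

lemma rcp_less[rcI]: assumes "rc g" "rc h" shows "rcp (\<lambda>a x. g a x < h a x)"
proof -
  have "rcp (\<lambda>a x. \<not> (h a x - g a x = 0))" by (intro rcp_not rcp_zero rcI assms)+
  moreover have "(\<lambda>a x. \<not> (h a x - g a x = 0)) = (\<lambda>a x. g a x < h a x)" by (rule ext)+ auto
  ultimately show ?thesis by simp
qed

lemma rcp_and[rcI]: assumes "rcp P" "rcp Q" shows "rcp (\<lambda>a x. P a x \<and> Q a x)"
proof -
  have "rc (\<lambda>a x. if P a x then (if Q a x then 1 else 0) else 0)"
    by (intro rc_if) (intro rcI assms)+
  moreover have "(\<lambda>a x. if P a x then (if Q a x then 1 else 0) else 0) = (\<lambda>a x. if P a x \<and> Q a x then 1 else (0::nat))" by (rule ext)+ auto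
  ultimately show ?thesis unfolding rcp_def by simp
qed

lemma rcp_or[rcI]: assumes "rcp P" "rcp Q" shows "rcp (\<lambda>a x. P a x \<or> Q a x)"
proof -
  have "rcp (\<lambda>a x. \<not> (\<not> P a x \<and> \<not> Q a x))" by (intro rcp_not rcp_and assms)+
  then show ?thesis by simp
qed

lemma rcp_le[rcI]: assumes "rc g" "rc h" shows "rcp (\<lambda>a x. g a x \<le> h a x)"
proof -
  have "rcp (\<lambda>a x. \<not> h a x < g a x)" by (intro rcp_not rcp_less assms)+
  then show ?thesis by (simp add: not_less)
qed

lemma rcp_True[rcI]: "rcp (\<lambda>a x. True)" unfolding rcp_def by (intro rcI)
lemma rcp_False[rcI]: "rcp (\<lambda>a x. False)" unfolding rcp_def by (intro rcI)

lemma precf_dm: assumes "d > 0"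
  shows "precf (\<lambda>y. 0) (\<lambda>z. if p2 (p1 (p2 z)) = d - 1 then pr (Suc (p1 (p1 (p2 z)))) 0
                             else pr (p1 (p1 (p2 z))) (Suc (p2 (p1 (p2 z))))) n y = pr (n div d) (n mod d)"
proof (induction n)
  case 0 then show ?case by simp
next
  case (Suc n)
  have "n mod d < d" using assms by simp
  then show ?case using Suc assms
    by (auto simp: div_Suc mod_Suc)
qed

lemma rc_divmod: assumes "d > 0" and "rc h"
  shows "rc (\<lambda>a x. pr (h a x div d) (h a x mod d))"
proof -
  have "rc (\<lambda>a x. precf (\<lambda>y. 0) (\<lambda>z. if p2 (p1 (p2 z)) = d - 1 then pr (Suc (p1 (p1 (p2 z)))) 0
                             else pr (p1 (p1 (p2 z))) (Suc (p2 (p1 (p2 z))))) (h a x) 0)"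
    by (rule rc_prec'[where F="\<lambda>a y. 0"]) (intro rcI assms(2))+
  then show ?thesis using precf_dm[OF assms(1)] by simp
qed

lemma rc_div[rcI]: "d > 0 \<Longrightarrow> rc h \<Longrightarrow> rc (\<lambda>a x. h a x div d)"
  using rc_p1[OF rc_divmod] by simp
lemma rc_mod[rcI]: "d > 0 \<Longrightarrow> rc h \<Longrightarrow> rc (\<lambda>a x. h a x mod d)"
  using rc_p2[OF rc_divmod] by simp


definition pc :: "(orc \<Rightarrow> nat \<Rightarrow> nat option) \<Rightarrow> bool" where
  "pc g \<longleftrightarrow> (\<exists>p. \<forall>a x v. eval (\<lambda>n. Some (a n)) p x v \<longleftrightarrow> g a x = Some v)"

lemma rc_prog: "rc h \<Longrightarrow> \<exists>p. \<forall>a x v. eval (\<lambda>n. Some (a n)) p x v \<longleftrightarrow> v = h a x"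
  unfolding rc_def using eval_det by blast

lemma pc_rc: "rc h \<Longrightarrow> pc (\<lambda>a x. Some (h a x))"
proof -
  assume "rc h"
  then obtain p where "\<forall>a x v. eval (\<lambda>n. Some (a n)) p x v \<longleftrightarrow> v = h a x" using rc_prog by blast
  then show ?thesis unfolding pc_def by (metis option.inject)
qed

lemma pc_bind: assumes "pc g1" "pc g2"
  shows "pc (\<lambda>a x. case g1 a x of None \<Rightarrow> None | Some v \<Rightarrow> g2 a (pr v x))"
proof -
  obtain G1 where G1: "\<And>a x v. eval (\<lambda>n. Some (a n)) G1 x v \<longleftrightarrow> g1 a x = Some v" using assms(1) unfolding pc_def by blast
  obtain G2 where G2: "\<And>a x v. eval (\<lambda>n. Some (a n)) G2 x v \<longleftrightarrow> g2 a x = Some v" using assms(2) unfolding pc_def by blast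
  have "eval (\<lambda>n. Some (a n)) (Comp G2 (Pair G1 Ident)) x v \<longleftrightarrow>
        (case g1 a x of None \<Rightarrow> None | Some u \<Rightarrow> g2 a (pr u x)) = Some v" for a x v
    by (auto simp: G1 G2 split: option.splits)
  then show ?thesis unfolding pc_def by blast
qed

lemma pc_pre: assumes "pc g" "rc h" shows "pc (\<lambda>a x. g a (h a x))"
proof -
  obtain G where G: "\<And>a x v. eval (\<lambda>n. Some (a n)) G x v \<longleftrightarrow> g a x = Some v" using assms(1) unfolding pc_def by blast
  obtain H where H: "\<And>a x v. eval (\<lambda>n. Some (a n)) H x v \<longleftrightarrow> v = h a x" using rc_prog[OF assms(2)] by blast
  have "eval (\<lambda>n. Some (a n)) (Comp G H) x v \<longleftrightarrow> g a (h a x) = Some v" for a x v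
    by (auto simp: G H)
  then show ?thesis unfolding pc_def by blast
qed

lemma pc_mu: assumes "rc h"
  shows "pc (\<lambda>a x. if \<exists>n. h a (pr n x) = 0 then Some (LEAST n. h a (pr n x) = 0) else None)"
proof -
  obtain H where H: "\<And>a x v. eval (\<lambda>n. Some (a n)) H x v \<longleftrightarrow> v = h a x" using rc_prog[OF assms] by blast
  have "eval (\<lambda>n. Some (a n)) (Mu H) x v \<longleftrightarrow>
     (if \<exists>n. h a (pr n x) = 0 then Some (LEAST n. h a (pr n x) = 0) else None) = Some v" for a x v
  proof -
    have "eval (\<lambda>n. Some (a n)) (Mu H) x v \<longleftrightarrow> h a (pr v x) = 0 \<and> (\<forall>i<v. h a (pr i x) \<noteq> 0)"
      by (auto simp: ev_Mu H)
    also have "\<dots> \<longleftrightarrow> (if \<exists>n. h a (pr n x) = 0 then Some (LEAST n. h a (pr n x) = 0) else None) = Some v"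
    proof
      assume A: "h a (pr v x) = 0 \<and> (\<forall>i<v. h a (pr i x) \<noteq> 0)"
      then have "(LEAST n. h a (pr n x) = 0) = v"
        by (intro Least_equality) (auto simp: not_less[symmetric])
      then show "(if \<exists>n. h a (pr n x) = 0 then Some (LEAST n. h a (pr n x) = 0) else None) = Some v"
        using A by auto
    next
      assume "(if \<exists>n. h a (pr n x) = 0 then Some (LEAST n. h a (pr n x) = 0) else None) = Some v"
      then have ex: "\<exists>n. h a (pr n x) = 0" and v: "v = (LEAST n. h a (pr n x) = 0)" by (auto split: if_splits)
      show "h a (pr v x) = 0 \<and> (\<forall>i<v. h a (pr i x) \<noteq> 0)"
        using LeastI_ex[OF ex] not_less_Least v by auto
    qed
    finally show ?thesis .
  qed
  then show ?thesis unfolding pc_def by blast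
qed

lemma pc_lif: assumes "rc c" "rc h" "pc g"
  shows "pc (\<lambda>a x. if c a x = 0 then Some (h a x) else g a x)"
proof -
  have "rc (\<lambda>a x. if c a x = 0 then 0 else 1)" by (intro rc_if0 assms rcI)
  then obtain C where C: "\<And>a x v. eval (\<lambda>n. Some (a n)) C x v \<longleftrightarrow> v = (if c a x = 0 then 0 else 1)"
    using rc_prog by blast
  obtain H where H: "\<And>a x v. eval (\<lambda>n. Some (a n)) H x v \<longleftrightarrow> v = h a x" using rc_prog[OF assms(2)] by blast
  obtain G where G: "\<And>a x v. eval (\<lambda>n. Some (a n)) G x v \<longleftrightarrow> g a x = Some v" using assms(3) unfolding pc_def by blast
  have R: "eval (\<lambda>n. Some (a n)) (Rec H (Comp G (Comp Snd Snd))) (pr k x) v \<longleftrightarrow>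
      (if k = 0 then Some (h a x) else g a x) = Some v" if "k = 0 \<or> k = 1" for a k x v
    using that by (auto simp: H G)
  have "eval (\<lambda>n. Some (a n)) (Comp (Rec H (Comp G (Comp Snd Snd))) (Pair C Ident)) x v \<longleftrightarrow>
        (if c a x = 0 then Some (h a x) else g a x) = Some v" for a x v
  proof -
    have "eval (\<lambda>n. Some (a n)) (Comp (Rec H (Comp G (Comp Snd Snd))) (Pair C Ident)) x v \<longleftrightarrow>
       eval (\<lambda>n. Some (a n)) (Rec H (Comp G (Comp Snd Snd))) (pr (if c a x = 0 then 0 else 1) x) v"
      by (auto simp: C)
    also have "\<dots> \<longleftrightarrow> (if c a x = 0 then Some (h a x) else g a x) = Some v"
      by (subst R) auto
    finally show ?thesis .
  qed
  then show ?thesis unfolding pc_def by blast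
qed

lemma pc_code: "pc g \<Longrightarrow> \<exists>e. \<forall>a x. Phi (\<lambda>n. Some (a n)) e x = g a x"
proof -
  assume "pc g"
  then obtain G where G: "\<And>a x v. eval (\<lambda>n. Some (a n)) G x v \<longleftrightarrow> g a x = Some v" unfolding pc_def by blast
  obtain e where e: "decode e = G" using decode_surj by blast
  have "Phi (\<lambda>n. Some (a n)) e x = g a x" for a x
    by (cases "g a x") (auto simp: Phi_None Phi_Some e G)
  then show ?thesis by blast
qed

lemma rc_code: "rc h \<Longrightarrow> \<exists>e. \<forall>a x. Phi (\<lambda>n. Some (a n)) e x = Some (h a x)"
  using pc_code[OF pc_rc] by blast

lemma pc_fixed: "pc (\<lambda>a x. Phi (\<lambda>n. Some (a n)) e x)"
  unfolding pc_def by (rule exI[of _ "decode e"]) (simp add: Phi_Some)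

definition chr :: "nat set \<Rightarrow> nat \<Rightarrow> nat" where "chr X n = (if n \<in> X then 1 else 0)"

lemma chi_chr: "chi X = (\<lambda>n. Some (chr X n))" by (rule ext) (simp add: chi_def chr_def)


lemma decode_lt6: "(e::nat) < 6 \<Longrightarrow> e = 0 \<or> e = 1 \<or> e = 2 \<or> e = 3 \<or> e = 4 \<or> e = 5" by auto

lemma mod4_cases: "(n::nat) mod 4 = 0 \<or> n mod 4 = 1 \<or> n mod 4 = 2 \<or> n mod 4 = 3" by auto

lemma decode_cases:
  "decode e = Zero \<longleftrightarrow> e = 0"
  "decode e = Succ \<longleftrightarrow> e = 1"
  "decode e = Ident \<longleftrightarrow> e = 2"
  "decode e = Fst \<longleftrightarrow> e = 3"
  "decode e = Snd \<longleftrightarrow> e = 4"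
  "decode e = Oracle \<longleftrightarrow> e = 5"
  "decode e = Pair f g \<longleftrightarrow> 6 \<le> e \<and> (e-6) mod 4 = 0 \<and> decode (p1 ((e-6) div 4)) = f \<and> decode (p2 ((e-6) div 4)) = g"
  "decode e = Comp f g \<longleftrightarrow> 6 \<le> e \<and> (e-6) mod 4 = 1 \<and> decode (p1 ((e-6) div 4)) = f \<and> decode (p2 ((e-6) div 4)) = g"
  "decode e = Rec f g \<longleftrightarrow> 6 \<le> e \<and> (e-6) mod 4 = 2 \<and> decode (p1 ((e-6) div 4)) = f \<and> decode (p2 ((e-6) div 4)) = g"
  "decode e = Mu f \<longleftrightarrow> 6 \<le> e \<and> (e-6) mod 4 = 3 \<and> decode ((e-6) div 4) = f"
  by (cases "e < 6"; (use decode_lt6[of e] in \<open>auto simp: decode_ge6\<close>); use mod4_cases[of "e - 6"] in \<open>auto simp: decode_ge6\<close>)+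

section \<open>The abstract machine\<close>

definition Ev :: "nat \<Rightarrow> nat \<Rightarrow> nat \<Rightarrow> nat" where "Ev l e x = pr 0 (pr l (pr e x))"
definition Rt :: "nat \<Rightarrow> nat" where "Rt v = pr 1 v"
definition push :: "nat \<Rightarrow> nat \<Rightarrow> nat" where "push fr K = Suc (pr fr K)"
definition FP1 :: "nat \<Rightarrow> nat \<Rightarrow> nat \<Rightarrow> nat" where "FP1 l g x = pr 0 (pr l (pr g x))"
definition FP2 :: "nat \<Rightarrow> nat" where "FP2 v = pr 1 v"
definition FC :: "nat \<Rightarrow> nat \<Rightarrow> nat" where "FC l f = pr 2 (pr l f)"
definition FR :: "nat \<Rightarrow> nat \<Rightarrow> nat \<Rightarrow> nat \<Rightarrow> nat" where "FR l g m y = pr 3 (pr l (pr g (pr m y)))"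
definition FM :: "nat \<Rightarrow> nat \<Rightarrow> nat \<Rightarrow> nat \<Rightarrow> nat" where "FM l f i x = pr 4 (pr l (pr f (pr i x)))"

lemmas mdefs = Ev_def Rt_def push_def FP1_def FP2_def FC_def FR_def FM_def

definition nstep :: "nat \<Rightarrow> nat \<Rightarrow> nat \<Rightarrow> nat" where
"nstep ans oc s = (let c = p1 s; K = p2 s in
  if p1 c = 0 then
    (let l = p1 (p2 c); e = p1 (p2 (p2 c)); x = p2 (p2 (p2 c)); m = (e - 6) div 4; k = (e - 6) mod 4 in
     if e = 0 then pr (Rt 0) K
     else if e = 1 then pr (Rt (Suc x)) K
     else if e = 2 then pr (Rt x) K
     else if e = 3 then pr (Rt (p1 x)) K
     else if e = 4 then pr (Rt (p2 x)) K
     else if e = 5 then (if l = 0 then pr (Rt ans) K else pr (Ev 0 oc x) K)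
     else if k = 0 then pr (Ev l (p1 m) x) (push (FP1 l (p2 m) x) K)
     else if k = 1 then pr (Ev l (p2 m) x) (push (FC l (p1 m)) K)
     else if k = 2 then (if p1 x = 0 then pr (Ev l (p1 m) (p2 x)) K
                         else pr (Ev l e (pr (p1 x - 1) (p2 x))) (push (FR l (p2 m) (p1 x - 1) (p2 x)) K))
     else pr (Ev l m (pr 0 x)) (push (FM l m 0 x) K))
  else
    (let v = p2 c; fr = p1 (K - 1); K' = p2 (K - 1); t = p1 fr; d = p2 fr in
     if K = 0 then s
     else if t = 0 then pr (Ev (p1 d) (p1 (p2 d)) (p2 (p2 d))) (push (FP2 v) K')
     else if t = 1 then pr (Rt (pr d v)) K'
     else if t = 2 then pr (Ev (p1 d) (p2 d) v) K'
     else if t = 3 then pr (Ev (p1 d) (p1 (p2 d)) (pr (p1 (p2 (p2 d))) (pr v (p2 (p2 (p2 d)))))) K'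
     else if v = 0 then pr (Rt (p1 (p2 (p2 d)))) K'
     else pr (Ev (p1 d) (p1 (p2 d)) (pr (Suc (p1 (p2 (p2 d)))) (p2 (p2 (p2 d)))))
             (push (FM (p1 d) (p1 (p2 d)) (Suc (p1 (p2 (p2 d)))) (p2 (p2 (p2 d)))) K')))"

definition isq :: "nat \<Rightarrow> bool" where
  "isq s \<longleftrightarrow> p1 (p1 s) = 0 \<and> p1 (p2 (p1 s)) = 0 \<and> p1 (p2 (p2 (p1 s))) = 5"
definition qry :: "nat \<Rightarrow> nat" where "qry s = p2 (p2 (p2 (p1 s)))"

lemma nstep_noq: "\<not> isq s \<Longrightarrow> nstep ans oc s = nstep ans' oc s"
  unfolding nstep_def isq_def Let_def by auto

definition stepA :: "(nat \<Rightarrow> nat) \<Rightarrow> nat \<Rightarrow> nat \<Rightarrow> nat" where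
  "stepA a oc s = nstep (a (qry s)) oc s"

definition iter :: "(nat \<Rightarrow> nat) \<Rightarrow> nat \<Rightarrow> nat \<Rightarrow> nat \<Rightarrow> nat" where
  "iter a oc n s = (stepA a oc ^^ n) s"

lemma iter_0[simp]: "iter a oc 0 s = s" by (simp add: iter_def)
lemma iter_Suc: "iter a oc (Suc n) s = iter a oc n (stepA a oc s)"
  by (simp add: iter_def funpow_swap1)
lemma iter_add: "iter a oc (m + n) s = iter a oc n (iter a oc m s)"
  unfolding iter_def by (metis add.commute comp_apply funpow_add)

lemma st_zero: "stepA a oc (pr (Ev l 0 x) K) = pr (Rt 0) K"
  by (simp add: stepA_def nstep_def mdefs)
lemma st_succ: "stepA a oc (pr (Ev l 1 x) K) = pr (Rt (Suc x)) K"
  by (simp add: stepA_def nstep_def mdefs)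
lemma st_ident: "stepA a oc (pr (Ev l 2 x) K) = pr (Rt x) K"
  by (simp add: stepA_def nstep_def mdefs)
lemma st_fst: "stepA a oc (pr (Ev l 3 x) K) = pr (Rt (p1 x)) K"
  by (simp add: stepA_def nstep_def mdefs)
lemma st_snd: "stepA a oc (pr (Ev l 4 x) K) = pr (Rt (p2 x)) K"
  by (simp add: stepA_def nstep_def mdefs)
lemma st_orc0: "stepA a oc (pr (Ev 0 5 x) K) = pr (Rt (a x)) K"
  by (simp add: stepA_def nstep_def mdefs qry_def)
lemma st_orc1: "l \<noteq> 0 \<Longrightarrow> stepA a oc (pr (Ev l 5 x) K) = pr (Ev 0 oc x) K"
  by (simp add: stepA_def nstep_def mdefs)
lemma st_pair: "6 \<le> e \<Longrightarrow> (e-6) mod 4 = 0 \<Longrightarrow>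
  stepA a oc (pr (Ev l e x) K) = pr (Ev l (p1 ((e-6) div 4)) x) (push (FP1 l (p2 ((e-6) div 4)) x) K)"
  by (simp add: stepA_def nstep_def Ev_def Rt_def Let_def)
lemma st_comp: "6 \<le> e \<Longrightarrow> (e-6) mod 4 = 1 \<Longrightarrow>
  stepA a oc (pr (Ev l e x) K) = pr (Ev l (p2 ((e-6) div 4)) x) (push (FC l (p1 ((e-6) div 4))) K)"
  by (simp add: stepA_def nstep_def Ev_def Rt_def Let_def)
lemma st_rec0: "6 \<le> e \<Longrightarrow> (e-6) mod 4 = 2 \<Longrightarrow>
  stepA a oc (pr (Ev l e (pr 0 y)) K) = pr (Ev l (p1 ((e-6) div 4)) y) K"
  by (simp add: stepA_def nstep_def Ev_def Rt_def Let_def)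
lemma st_recS: "6 \<le> e \<Longrightarrow> (e-6) mod 4 = 2 \<Longrightarrow>
  stepA a oc (pr (Ev l e (pr (Suc n) y)) K) = pr (Ev l e (pr n y)) (push (FR l (p2 ((e-6) div 4)) n y) K)"
  by (simp add: stepA_def nstep_def Ev_def Rt_def Let_def)
lemma st_mu: "6 \<le> e \<Longrightarrow> (e-6) mod 4 = 3 \<Longrightarrow>
  stepA a oc (pr (Ev l e x) K) = pr (Ev l ((e-6) div 4) (pr 0 x)) (push (FM l ((e-6) div 4) 0 x) K)"
  by (simp add: stepA_def nstep_def Ev_def Rt_def Let_def)

lemma st_halt: "stepA a oc (pr (Rt v) 0) = pr (Rt v) 0"
  by (simp add: stepA_def nstep_def mdefs)
lemma st_fp1: "stepA a oc (pr (Rt v) (push (FP1 l g x) K)) = pr (Ev l g x) (push (FP2 v) K)"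
  by (simp add: stepA_def nstep_def mdefs)
lemma st_fp2: "stepA a oc (pr (Rt w) (push (FP2 v) K)) = pr (Rt (pr v w)) K"
  by (simp add: stepA_def nstep_def mdefs)
lemma st_fc: "stepA a oc (pr (Rt y) (push (FC l f) K)) = pr (Ev l f y) K"
  by (simp add: stepA_def nstep_def mdefs)
lemma st_fr: "stepA a oc (pr (Rt w) (push (FR l g n y) K)) = pr (Ev l g (pr n (pr w y))) K"
  by (simp add: stepA_def nstep_def mdefs)
lemma st_fm0: "stepA a oc (pr (Rt 0) (push (FM l f i x) K)) = pr (Rt i) K"
  by (simp add: stepA_def nstep_def mdefs)
lemma st_fmS: "v \<noteq> 0 \<Longrightarrow> stepA a oc (pr (Rt v) (push (FM l f i x) K)) = pr (Ev l f (pr (Suc i) x)) (push (FM l f (Suc i) x) K)"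
  by (simp add: stepA_def nstep_def mdefs)


definition orc :: "(nat \<Rightarrow> nat) \<Rightarrow> nat \<Rightarrow> nat \<Rightarrow> pfun" where
  "orc a oc l = (if l = 0 then (\<lambda>n. Some (a n)) else Phi (\<lambda>n. Some (a n)) oc)"

definition reach :: "(nat \<Rightarrow> nat) \<Rightarrow> nat \<Rightarrow> nat \<Rightarrow> nat \<Rightarrow> bool" where
  "reach a oc s t \<longleftrightarrow> (\<exists>n. iter a oc n s = t)"

lemma reach_refl: "reach a oc s s" unfolding reach_def by (rule exI[of _ 0]) simp
lemma reach_trans[trans]: "reach a oc s t \<Longrightarrow> reach a oc t u \<Longrightarrow> reach a oc s u"
  unfolding reach_def by (metis iter_add)
lemma reach_step: "reach a oc (stepA a oc s) t \<Longrightarrow> reach a oc s t"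
  unfolding reach_def by (metis iter_Suc)
lemma reach_step1: "stepA a oc s = t \<Longrightarrow> reach a oc s t"
  using reach_step reach_refl by metis

lemma complete_gen:
  assumes "eval \<alpha> p x v"
  and orcH: "\<And>y w K. \<alpha> y = Some w \<Longrightarrow> reach a oc (pr (Ev l 5 y) K) (pr (Rt w) K)"
  shows "\<forall>e K. decode e = p \<longrightarrow> reach a oc (pr (Ev l e x) K) (pr (Rt v) K)"
  using assms(1)
proof (induction rule: eval.induct)
  case (ev_zero x)
  then show ?case by (auto simp: decode_cases intro!: reach_step1 st_zero)
next
  case (ev_succ x)
  have "stepA a oc (pr (Ev l (Suc 0) x) K) = pr (Rt (Suc x)) K" for K using st_succ by simp
  then show ?case by (auto simp: decode_cases intro!: reach_step1)
next
  case (ev_ident x)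
  then show ?case by (auto simp: decode_cases intro!: reach_step1 st_ident)
next
  case (ev_fst x)
  then show ?case by (auto simp: decode_cases p1_def[symmetric] intro!: reach_step1 st_fst)
next
  case (ev_snd x)
  then show ?case by (auto simp: decode_cases p2_def[symmetric] intro!: reach_step1 st_snd)
next
  case (ev_oracle x v)
  then show ?case by (auto simp: decode_cases intro!: orcH)
next
  case (ev_pair f x a' g b)
  show ?case
  proof (intro allI impI)
    fix e K assume d: "decode e = Pair f g"
    let ?m = "(e - 6) div 4"
    have e: "6 \<le> e" "(e-6) mod 4 = 0" "decode (p1 ?m) = f" "decode (p2 ?m) = g" using d by (auto simp: decode_cases)
    have "reach a oc (pr (Ev l e x) K) (pr (Ev l (p1 ?m) x) (push (FP1 l (p2 ?m) x) K))"
      using e by (intro reach_step1 st_pair)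
    also have "reach a oc \<dots> (pr (Rt a') (push (FP1 l (p2 ?m) x) K))" using ev_pair.IH(1) e by blast
    also have "reach a oc \<dots> (pr (Ev l (p2 ?m) x) (push (FP2 a') K))" by (intro reach_step1 st_fp1)
    also have "reach a oc \<dots> (pr (Rt b) (push (FP2 a') K))" using ev_pair.IH(2) e by blast
    also have "reach a oc \<dots> (pr (Rt (prod_encode (a', b))) K)" unfolding pr_def[symmetric] by (intro reach_step1 st_fp2)
    finally show "reach a oc (pr (Ev l e x) K) (pr (Rt (prod_encode (a', b))) K)" .
  qed
next
  case (ev_comp g x y f v)
  show ?case
  proof (intro allI impI)
    fix e K assume d: "decode e = Comp f g"
    let ?m = "(e - 6) div 4"
    have e: "6 \<le> e" "(e-6) mod 4 = 1" "decode (p1 ?m) = f" "decode (p2 ?m) = g" using d by (auto simp: decode_cases)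
    have "reach a oc (pr (Ev l e x) K) (pr (Ev l (p2 ?m) x) (push (FC l (p1 ?m)) K))"
      using e by (intro reach_step1 st_comp)
    also have "reach a oc \<dots> (pr (Rt y) (push (FC l (p1 ?m)) K))" using ev_comp.IH(1) e by blast
    also have "reach a oc \<dots> (pr (Ev l (p1 ?m) y) K)" by (intro reach_step1 st_fc)
    also have "reach a oc \<dots> (pr (Rt v) K)" using ev_comp.IH(2) e by blast
    finally show "reach a oc (pr (Ev l e x) K) (pr (Rt v) K)" .
  qed
next
  case (ev_rec0 f y v g)
  show ?case
  proof (intro allI impI)
    fix e K assume d: "decode e = Rec f g"
    let ?m = "(e - 6) div 4"
    have e: "6 \<le> e" "(e-6) mod 4 = 2" "decode (p1 ?m) = f" "decode (p2 ?m) = g" using d by (auto simp: decode_cases)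
    have "reach a oc (pr (Ev l e (pr 0 y)) K) (pr (Ev l (p1 ?m) y) K)"
      using e by (intro reach_step1 st_rec0)
    also have "reach a oc \<dots> (pr (Rt v) K)" using ev_rec0.IH e by blast
    finally show "reach a oc (pr (Ev l e (prod_encode (0, y))) K) (pr (Rt v) K)" by (simp add: pr_def)
  qed
next
  case (ev_recS f g n y w v)
  show ?case
  proof (intro allI impI)
    fix e K assume d: "decode e = Rec f g"
    let ?m = "(e - 6) div 4"
    have e: "6 \<le> e" "(e-6) mod 4 = 2" "decode (p1 ?m) = f" "decode (p2 ?m) = g" using d by (auto simp: decode_cases)
    have "reach a oc (pr (Ev l e (pr (Suc n) y)) K) (pr (Ev l e (pr n y)) (push (FR l (p2 ?m) n y) K))"
      using e by (intro reach_step1 st_recS)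
    also have "reach a oc \<dots> (pr (Rt w) (push (FR l (p2 ?m) n y) K))" using ev_recS.IH(1) d by (simp add: pr_def)
    also have "reach a oc \<dots> (pr (Ev l (p2 ?m) (pr n (pr w y))) K)" by (intro reach_step1 st_fr)
    also have "reach a oc \<dots> (pr (Rt v) K)" using ev_recS.IH(2) e by (simp add: pr_def)
    finally show "reach a oc (pr (Ev l e (prod_encode (Suc n, y))) K) (pr (Rt v) K)" by (simp add: pr_def)
  qed
next
  case (ev_mu f n x)
  show ?case
  proof (intro allI impI)
    fix e K assume d: "decode e = Mu f"
    let ?m = "(e - 6) div 4"
    have e: "6 \<le> e" "(e-6) mod 4 = 3" "decode ?m = f" using d by (auto simp: decode_cases)
    have loop: "\<forall>i. n - i = dd \<longrightarrow> i \<le> n \<longrightarrow>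
       reach a oc (pr (Ev l ?m (pr i x)) (push (FM l ?m i x) K)) (pr (Rt n) K)" for dd
    proof (induction dd)
      case 0
      show ?case
      proof (intro allI impI)
        fix i assume "n - i = 0" "i \<le> n"
        then have i: "i = n" by simp
        have "reach a oc (pr (Ev l ?m (pr i x)) (push (FM l ?m i x) K)) (pr (Rt 0) (push (FM l ?m i x) K))"
          using ev_mu.IH(1) e i by (simp add: pr_def)
        also have "reach a oc \<dots> (pr (Rt i) K)" by (intro reach_step1 st_fm0)
        finally show "reach a oc (pr (Ev l ?m (pr i x)) (push (FM l ?m i x) K)) (pr (Rt n) K)" using i by simp
      qed
    next
      case (Suc dd)
      show ?case
      proof (intro allI impI)
        fix i assume i: "n - i = Suc dd" "i \<le> n"
        then have "i < n" by simp
        then obtain v where v: "v \<noteq> 0" "\<forall>e K. decode e = f \<longrightarrow> reach a oc (pr (Ev l e (pr i x)) K) (pr (Rt v) K)"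
          using ev_mu.IH(2) by (auto simp: pr_def)
        have "reach a oc (pr (Ev l ?m (pr i x)) (push (FM l ?m i x) K)) (pr (Rt v) (push (FM l ?m i x) K))"
          using v e by blast
        also have "reach a oc \<dots> (pr (Ev l ?m (pr (Suc i) x)) (push (FM l ?m (Suc i) x) K))"
          using v by (intro reach_step1 st_fmS)
        also have "reach a oc \<dots> (pr (Rt n) K)" using Suc.IH i by auto
        finally show "reach a oc (pr (Ev l ?m (pr i x)) (push (FM l ?m i x) K)) (pr (Rt n) K)" .
      qed
    qed
    have "reach a oc (pr (Ev l e x) K) (pr (Ev l ?m (pr 0 x)) (push (FM l ?m 0 x) K))"
      using e by (intro reach_step1 st_mu)
    also have "reach a oc \<dots> (pr (Rt n) K)" using loop[of n] by simp
    finally show "reach a oc (pr (Ev l e x) K) (pr (Rt n) K)" .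
  qed
qed


lemma Ev_ne_fin: "pr (Ev l e x) K \<noteq> pr (Rt r) 0" by (simp add: Ev_def Rt_def)
lemma push_ne_fin: "pr (Rt v) (push fr K) \<noteq> pr (Rt r) 0" by (simp add: push_def)

lemma seq: assumes "iter a oc n S = F" "iter a oc m1 S = T" "m1 \<le> n" "T \<noteq> F"
  shows "\<exists>k. n = m1 + Suc k \<and> iter a oc k (stepA a oc T) = F"
proof -
  have "iter a oc (n - m1) T = F" using assms(1-3) iter_add[of a oc m1 "n - m1" S] by simp
  moreover have "n - m1 \<noteq> 0" using assms(1-4) by (metis diff_is_0_eq iter_0 le_antisym)
  ultimately obtain k where "n - m1 = Suc k" "iter a oc k (stepA a oc T) = F"
    by (metis iter_Suc not0_implies_Suc)
  then show ?thesis using assms(3) by (intro exI[of _ k]) auto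
qed

lemma iter_seq: "iter a oc m1 S = T \<Longrightarrow> iter a oc m2 (stepA a oc T) = U \<Longrightarrow> iter a oc (m1 + Suc m2) S = U"
  by (metis iter_add iter_Suc)

lemma iter_pre: "stepA a oc S = S1 \<Longrightarrow> iter a oc m S1 = T \<Longrightarrow> iter a oc (Suc m) S = T"
  by (simp add: iter_Suc)

lemma first_step: assumes "iter a oc n S = F" "S \<noteq> F"
  shows "\<exists>k. n = Suc k \<and> iter a oc k (stepA a oc S) = F"
  using seq[OF assms(1), of 0 S] assms by simp

lemma iter1: "stepA a oc S = T \<Longrightarrow> iter a oc (Suc 0) S = T" by (simp add: iter_Suc)

definition EvC where "EvC a oc r n \<longleftrightarrow> (\<forall>l e x K. iter a oc n (pr (Ev l e x) K) = pr (Rt r) 0 \<longrightarrow>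
   (\<exists>v m. m \<le> n \<and> iter a oc m (pr (Ev l e x) K) = pr (Rt v) K \<and> eval (orc a oc l) (decode e) x v))"

definition MuC where "MuC a oc r n \<longleftrightarrow> (\<forall>l f i x K. iter a oc n (pr (Ev l f (pr i x)) (push (FM l f i x) K)) = pr (Rt r) 0 \<longrightarrow>
   (\<exists>v m. m \<le> n \<and> iter a oc m (pr (Ev l f (pr i x)) (push (FM l f i x) K)) = pr (Rt v) K \<and> i \<le> v \<and>
      eval (orc a oc l) (decode f) (pr v x) 0 \<and>
      (\<forall>j. i \<le> j \<and> j < v \<longrightarrow> (\<exists>w. w \<noteq> 0 \<and> eval (orc a oc l) (decode f) (pr j x) w))))"

lemma sound_step_Ev:
  assumes IH: "\<And>n'. n' < n \<Longrightarrow> EvC a oc r n' \<and> MuC a oc r n'"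
  shows "EvC a oc r n"
  unfolding EvC_def
proof (intro allI impI)
  fix l e x K
  let ?S = "pr (Ev l e x) K"
  let ?F = "pr (Rt r) 0"
  let ?\<alpha> = "orc a oc l"
  let ?m = "(e - 6) div 4"
  assume H: "iter a oc n ?S = ?F"
  obtain n' where n': "n = Suc n'" "iter a oc n' (stepA a oc ?S) = ?F"
    using first_step[OF H Ev_ne_fin] by blast
  have IHE: "\<And>k l e x K. k < n \<Longrightarrow> iter a oc k (pr (Ev l e x) K) = ?F \<Longrightarrow>
     \<exists>v m. m \<le> k \<and> iter a oc m (pr (Ev l e x) K) = pr (Rt v) K \<and> eval (orc a oc l) (decode e) x v"
    using IH unfolding EvC_def by blast
  have IHM: "\<And>k l f i x K. k < n \<Longrightarrow> iter a oc k (pr (Ev l f (pr i x)) (push (FM l f i x) K)) = ?F \<Longrightarrow>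
   (\<exists>v m. m \<le> k \<and> iter a oc m (pr (Ev l f (pr i x)) (push (FM l f i x) K)) = pr (Rt v) K \<and> i \<le> v \<and>
      eval (orc a oc l) (decode f) (pr v x) 0 \<and>
      (\<forall>j. i \<le> j \<and> j < v \<longrightarrow> (\<exists>w. w \<noteq> 0 \<and> eval (orc a oc l) (decode f) (pr j x) w)))"
    using IH unfolding MuC_def by blast
  show "\<exists>v m. m \<le> n \<and> iter a oc m ?S = pr (Rt v) K \<and> eval ?\<alpha> (decode e) x v"
  proof (cases "e < 6")
    case True
    then consider "e = 0" | "e = 1" | "e = 2" | "e = 3" | "e = 4" | "e = 5" by linarith
    then show ?thesis
    proof cases
      case 1 then show ?thesis using n' by (intro exI[of _ 0] exI[of _ 1]) (auto simp: iter1 st_zero)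
    next
      case 2
      have "stepA a oc ?S = pr (Rt (Suc x)) K" using st_succ 2 by simp
      then show ?thesis using n' 2 by (intro exI[of _ "Suc x"] exI[of _ 1]) (auto simp: iter1)
    next
      case 3 then show ?thesis using n' by (intro exI[of _ x] exI[of _ 1]) (auto simp: iter1 st_ident)
    next
      case 4 then show ?thesis using n' by (intro exI[of _ "p1 x"] exI[of _ 1]) (auto simp: iter1 st_fst)
    next
      case 5 then show ?thesis using n' by (intro exI[of _ "p2 x"] exI[of _ 1]) (auto simp: iter1 st_snd)
    next
      case 6
      show ?thesis
      proof (cases "l = 0")
        case True
        then show ?thesis using n' 6 by (intro exI[of _ "a x"] exI[of _ 1]) (auto simp: iter1 st_orc0 orc_def)
      next
        case False
        then have st: "stepA a oc ?S = pr (Ev 0 oc x) K" using 6 st_orc1 by simp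
        obtain v m where vm: "m \<le> n'" "iter a oc m (pr (Ev 0 oc x) K) = pr (Rt v) K"
           "eval (orc a oc 0) (decode oc) x v"
          using IHE[of n' 0 oc x K] n' st by auto
        have "eval ?\<alpha> (decode e) x v" using 6 False vm(3) by (simp add: orc_def Phi_Some)
        moreover have "iter a oc (Suc m) ?S = pr (Rt v) K" by (rule iter_pre[OF st vm(2)])
        ultimately show ?thesis using vm n' by (intro exI[of _ v] exI[of _ "Suc m"]) auto
      qed
    qed
  next
    case False
    then have e6: "6 \<le> e" by simp
    consider "(e-6) mod 4 = 0" | "(e-6) mod 4 = 1" | "(e-6) mod 4 = 2" | "(e-6) mod 4 = 3" by linarith
    then show ?thesis
    proof cases
      case 1
      have dec: "decode e = Pair (decode (p1 ?m)) (decode (p2 ?m))" using e6 1 by (simp add: decode_cases)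
      let ?S1 = "pr (Ev l (p1 ?m) x) (push (FP1 l (p2 ?m) x) K)"
      have st1: "stepA a oc ?S = ?S1" using e6 1 by (rule st_pair)
      obtain v1 m1 where A: "m1 \<le> n'" "iter a oc m1 ?S1 = pr (Rt v1) (push (FP1 l (p2 ?m) x) K)"
        "eval ?\<alpha> (decode (p1 ?m)) x v1"
        using IHE[of n' l "p1 ?m" x "push (FP1 l (p2 ?m) x) K"] n' st1 by auto
      obtain k1 where k1: "n' = m1 + Suc k1" "iter a oc k1 (stepA a oc (pr (Rt v1) (push (FP1 l (p2 ?m) x) K))) = ?F"
        using seq[OF _ A(2) A(1) push_ne_fin] n' st1 by auto
      let ?S2 = "pr (Ev l (p2 ?m) x) (push (FP2 v1) K)"
      have st2: "stepA a oc (pr (Rt v1) (push (FP1 l (p2 ?m) x) K)) = ?S2" by (rule st_fp1)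
      obtain v2 m2 where B: "m2 \<le> k1" "iter a oc m2 ?S2 = pr (Rt v2) (push (FP2 v1) K)"
        "eval ?\<alpha> (decode (p2 ?m)) x v2"
        using IHE[of k1 l "p2 ?m" x "push (FP2 v1) K"] n' k1 st2 by auto
      obtain k2 where k2: "k1 = m2 + Suc k2"
        using seq[OF _ B(2) B(1) push_ne_fin] k1 st2 by auto
      have "iter a oc (m2 + Suc 0) ?S2 = pr (Rt (pr v1 v2)) K"
        by (rule iter_seq[OF B(2)]) (simp add: st_fp2)
      then have "iter a oc (m1 + Suc (m2 + Suc 0)) ?S1 = pr (Rt (pr v1 v2)) K"
        by (intro iter_seq[OF A(2)]) (simp add: st2)
      then have "iter a oc (Suc (m1 + Suc (m2 + Suc 0))) ?S = pr (Rt (pr v1 v2)) K"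
        by (rule iter_pre[OF st1])
      moreover have "eval ?\<alpha> (decode e) x (pr v1 v2)" using dec A(3) B(3) by auto
      ultimately show ?thesis using n' k1 k2 by (intro exI[of _ "pr v1 v2"] exI[of _ "Suc (m1 + Suc (m2 + Suc 0))"]) auto
    next
      case 2
      have dec: "decode e = Comp (decode (p1 ?m)) (decode (p2 ?m))" using e6 2 by (simp add: decode_cases)
      let ?S1 = "pr (Ev l (p2 ?m) x) (push (FC l (p1 ?m)) K)"
      have st1: "stepA a oc ?S = ?S1" using e6 2 by (rule st_comp)
      obtain v1 m1 where A: "m1 \<le> n'" "iter a oc m1 ?S1 = pr (Rt v1) (push (FC l (p1 ?m)) K)"
        "eval ?\<alpha> (decode (p2 ?m)) x v1"
        using IHE[of n' l "p2 ?m" x "push (FC l (p1 ?m)) K"] n' st1 by auto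
      obtain k1 where k1: "n' = m1 + Suc k1" "iter a oc k1 (stepA a oc (pr (Rt v1) (push (FC l (p1 ?m)) K))) = ?F"
        using seq[OF _ A(2) A(1) push_ne_fin] n' st1 by auto
      let ?S2 = "pr (Ev l (p1 ?m) v1) K"
      have st2: "stepA a oc (pr (Rt v1) (push (FC l (p1 ?m)) K)) = ?S2" by (rule st_fc)
      obtain v2 m2 where B: "m2 \<le> k1" "iter a oc m2 ?S2 = pr (Rt v2) K"
        "eval ?\<alpha> (decode (p1 ?m)) v1 v2"
        using IHE[of k1 l "p1 ?m" v1 K] n' k1 st2 by auto
      have "iter a oc (m1 + Suc m2) ?S1 = pr (Rt v2) K"
        by (intro iter_seq[OF A(2)]) (simp add: st2 B(2))
      then have "iter a oc (Suc (m1 + Suc m2)) ?S = pr (Rt v2) K"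
        by (rule iter_pre[OF st1])
      moreover have "eval ?\<alpha> (decode e) x v2" using dec A(3) B(3) by auto
      ultimately show ?thesis using n' k1 B(1) by (intro exI[of _ v2] exI[of _ "Suc (m1 + Suc m2)"]) auto
    next
      case 3
      have dec: "decode e = Rec (decode (p1 ?m)) (decode (p2 ?m))" using e6 3 by (simp add: decode_cases)
      obtain j y where xjy: "x = pr j y" using pr_surj by blast
      show ?thesis
      proof (cases j)
        case 0
        have st1: "stepA a oc ?S = pr (Ev l (p1 ?m) y) K" using e6 3 xjy 0 by (simp add: st_rec0)
        obtain v m where A: "m \<le> n'" "iter a oc m (pr (Ev l (p1 ?m) y) K) = pr (Rt v) K"
          "eval ?\<alpha> (decode (p1 ?m)) y v"
          using IHE[of n' l "p1 ?m" y K] n' st1 by auto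
        have "iter a oc (Suc m) ?S = pr (Rt v) K" by (rule iter_pre[OF st1 A(2)])
        moreover have "eval ?\<alpha> (decode e) x v" using dec A(3) xjy 0 by simp
        ultimately show ?thesis using n' A(1) by (intro exI[of _ v] exI[of _ "Suc m"]) auto
      next
        case (Suc jj)
        let ?S1 = "pr (Ev l e (pr jj y)) (push (FR l (p2 ?m) jj y) K)"
        have st1: "stepA a oc ?S = ?S1" using e6 3 xjy Suc by (simp add: st_recS)
        obtain w m1 where A: "m1 \<le> n'" "iter a oc m1 ?S1 = pr (Rt w) (push (FR l (p2 ?m) jj y) K)"
          "eval ?\<alpha> (decode e) (pr jj y) w"
          using IHE[of n' l e "pr jj y" "push (FR l (p2 ?m) jj y) K"] n' st1 by auto
        obtain k1 where k1: "n' = m1 + Suc k1" "iter a oc k1 (stepA a oc (pr (Rt w) (push (FR l (p2 ?m) jj y) K))) = ?F"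
          using seq[OF _ A(2) A(1) push_ne_fin] n' st1 by auto
        let ?S2 = "pr (Ev l (p2 ?m) (pr jj (pr w y))) K"
        have st2: "stepA a oc (pr (Rt w) (push (FR l (p2 ?m) jj y) K)) = ?S2" by (rule st_fr)
        obtain v m2 where B: "m2 \<le> k1" "iter a oc m2 ?S2 = pr (Rt v) K"
          "eval ?\<alpha> (decode (p2 ?m)) (pr jj (pr w y)) v"
          using IHE[of k1 l "p2 ?m" "pr jj (pr w y)" K] n' k1 st2 by auto
        have "iter a oc (m1 + Suc m2) ?S1 = pr (Rt v) K"
          by (intro iter_seq[OF A(2)]) (simp add: st2 B(2))
        then have "iter a oc (Suc (m1 + Suc m2)) ?S = pr (Rt v) K"
          by (rule iter_pre[OF st1])
        moreover have "eval ?\<alpha> (decode e) x v" using dec A(3) B(3) xjy Suc by auto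
        ultimately show ?thesis using n' k1 B(1) by (intro exI[of _ v] exI[of _ "Suc (m1 + Suc m2)"]) auto
      qed
    next
      case 4
      have dec: "decode e = Mu (decode ?m)" using e6 4 by (simp add: decode_cases)
      let ?S1 = "pr (Ev l ?m (pr 0 x)) (push (FM l ?m 0 x) K)"
      have st1: "stepA a oc ?S = ?S1" using e6 4 by (rule st_mu)
      obtain v m where A: "m \<le> n'" "iter a oc m ?S1 = pr (Rt v) K"
         "eval ?\<alpha> (decode ?m) (pr v x) 0"
         "\<forall>j. 0 \<le> j \<and> j < v \<longrightarrow> (\<exists>w. w \<noteq> 0 \<and> eval ?\<alpha> (decode ?m) (pr j x) w)"
        using IHM[of n' l ?m 0 x K] n' st1 by auto
      have "iter a oc (Suc m) ?S = pr (Rt v) K" by (rule iter_pre[OF st1 A(2)])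
      moreover have "eval ?\<alpha> (decode e) x v" using dec A(3,4) by (auto simp: ev_Mu)
      ultimately show ?thesis using n' A(1) by (intro exI[of _ v] exI[of _ "Suc m"]) auto
    qed
  qed
qed

lemma sound_step_Mu:
  assumes IH: "\<And>n'. n' < n \<Longrightarrow> EvC a oc r n' \<and> MuC a oc r n'" and E: "EvC a oc r n"
  shows "MuC a oc r n"
  unfolding MuC_def
proof (intro allI impI)
  fix l f i x K
  let ?S = "pr (Ev l f (pr i x)) (push (FM l f i x) K)"
  let ?F = "pr (Rt r) 0"
  let ?\<alpha> = "orc a oc l"
  assume H: "iter a oc n ?S = ?F"
  obtain v1 m1 where A: "m1 \<le> n" "iter a oc m1 ?S = pr (Rt v1) (push (FM l f i x) K)"
    "eval ?\<alpha> (decode f) (pr i x) v1"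
    using E H unfolding EvC_def by blast
  obtain k1 where k1: "n = m1 + Suc k1" "iter a oc k1 (stepA a oc (pr (Rt v1) (push (FM l f i x) K))) = ?F"
    using seq[OF H A(2) A(1) push_ne_fin] by auto
  show "\<exists>v m. m \<le> n \<and> iter a oc m ?S = pr (Rt v) K \<and> i \<le> v \<and>
      eval ?\<alpha> (decode f) (pr v x) 0 \<and>
      (\<forall>j. i \<le> j \<and> j < v \<longrightarrow> (\<exists>w. w \<noteq> 0 \<and> eval ?\<alpha> (decode f) (pr j x) w))"
  proof (cases "v1 = 0")
    case True
    have "iter a oc (m1 + Suc 0) ?S = pr (Rt i) K" by (rule iter_seq[OF A(2)]) (simp add: True st_fm0)
    then show ?thesis using A True k1 by (intro exI[of _ i] exI[of _ "m1 + Suc 0"]) auto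
  next
    case False
    let ?S2 = "pr (Ev l f (pr (Suc i) x)) (push (FM l f (Suc i) x) K)"
    have st2: "stepA a oc (pr (Rt v1) (push (FM l f i x) K)) = ?S2" using False by (rule st_fmS)
    have "k1 < n" using k1 by simp
    then obtain v m2 where B: "m2 \<le> k1" "iter a oc m2 ?S2 = pr (Rt v) K" "Suc i \<le> v"
      "eval ?\<alpha> (decode f) (pr v x) 0"
      "\<forall>j. Suc i \<le> j \<and> j < v \<longrightarrow> (\<exists>w. w \<noteq> 0 \<and> eval ?\<alpha> (decode f) (pr j x) w)"
      using IH[of k1] k1 st2 unfolding MuC_def by fastforce
    have "iter a oc (m1 + Suc m2) ?S = pr (Rt v) K" by (rule iter_seq[OF A(2)]) (simp add: st2 B(2))
    moreover have "\<forall>j. i \<le> j \<and> j < v \<longrightarrow> (\<exists>w. w \<noteq> 0 \<and> eval ?\<alpha> (decode f) (pr j x) w)"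
    proof (intro allI impI)
      fix j assume j: "i \<le> j \<and> j < v"
      show "\<exists>w. w \<noteq> 0 \<and> eval ?\<alpha> (decode f) (pr j x) w"
      proof (cases "j = i")
        case True then show ?thesis using A(3) False by blast
      next
        case False then show ?thesis using B(5) j by auto
      qed
    qed
    ultimately show ?thesis using B k1 by (intro exI[of _ v] exI[of _ "m1 + Suc m2"]) auto
  qed
qed

lemma sound_all: "EvC a oc r n \<and> MuC a oc r n"
proof (induction n rule: less_induct)
  case (less n)
  have E: "EvC a oc r n" by (rule sound_step_Ev) (use less in blast)
  have M: "MuC a oc r n" by (rule sound_step_Mu) (use less E in blast)+
  show ?case using E M by blast
qed

lemma iter_halt: "iter a oc n (pr (Rt v) 0) = pr (Rt v) 0"
  by (induction n) (simp_all add: iter_Suc st_halt)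

lemma complete0: assumes "eval (\<lambda>n. Some (a n)) (decode e) x v" shows "reach a oc (pr (Ev 0 e x) K) (pr (Rt v) K)"
proof -
  have oh: "reach a oc (pr (Ev 0 5 y) K) (pr (Rt w) K)" if "Some (a y) = Some w" for y w K
    using that by (auto intro!: reach_step1 st_orc0)
  show ?thesis using complete_gen[of "\<lambda>n. Some (a n)" "decode e" x v a oc 0, OF assms oh] by blast
qed

lemma complete_orc: "eval (orc a oc l) (decode e) x v \<Longrightarrow> reach a oc (pr (Ev l e x) K) (pr (Rt v) K)"
proof (cases "l = 0")
  case True
  then show "eval (orc a oc l) (decode e) x v \<Longrightarrow> ?thesis" by (simp add: orc_def complete0)
next
  case False
  have oh: "reach a oc (pr (Ev l 5 y) K) (pr (Rt w) K)" if "orc a oc l y = Some w" for y w K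
  proof -
    have "eval (\<lambda>n. Some (a n)) (decode oc) y w" using that False by (simp add: orc_def Phi_Some)
    then have "reach a oc (pr (Ev 0 oc y) K) (pr (Rt w) K)" by (rule complete0)
    moreover have "stepA a oc (pr (Ev l 5 y) K) = pr (Ev 0 oc y) K" using False by (rule st_orc1)
    ultimately show ?thesis by (metis reach_step)
  qed
  show "eval (orc a oc l) (decode e) x v \<Longrightarrow> ?thesis"
    using complete_gen[of "orc a oc l" "decode e" x v a oc l] oh by blast
qed

theorem machine_correct:
  "(\<exists>n. iter a oc n (pr (Ev l e x) 0) = pr (Rt v) 0) \<longleftrightarrow> eval (orc a oc l) (decode e) x v"
proof
  assume "\<exists>n. iter a oc n (pr (Ev l e x) 0) = pr (Rt v) 0"
  then obtain n where n: "iter a oc n (pr (Ev l e x) 0) = pr (Rt v) 0" by blast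
  then obtain v' m where vm: "m \<le> n" "iter a oc m (pr (Ev l e x) 0) = pr (Rt v') 0"
    "eval (orc a oc l) (decode e) x v'"
    using sound_all[of a oc v n] unfolding EvC_def by blast
  have "iter a oc n (pr (Ev l e x) 0) = pr (Rt v') 0"
    using vm(1,2) iter_add[of a oc m "n - m" "pr (Ev l e x) 0"] iter_halt by simp
  then have "v = v'" using n by (simp add: Rt_def)
  then show "eval (orc a oc l) (decode e) x v" using vm by simp
next
  assume "eval (orc a oc l) (decode e) x v"
  then show "\<exists>n. iter a oc n (pr (Ev l e x) 0) = pr (Rt v) 0"
    using complete_orc reach_def by metis
qed


lemma rc_nstep: assumes "rc A" "rc Oc" "rc S"
  shows "rc (\<lambda>a x. nstep (A a x) (Oc a x) (S a x))"
  unfolding nstep_def Let_def mdefs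
  by (intro rcI assms zero_less_numeral)+

lemma rc_stepA: assumes "rc Oc" "rc S"
  shows "rc (\<lambda>a x. stepA a (Oc a x) (S a x))"
  unfolding stepA_def qry_def by (intro rc_nstep rcI assms)+

lemma iter_Suc2: "iter a oc (Suc n) s = stepA a oc (iter a oc n s)"
  by (simp add: iter_def)

lemma precf_iter: "precf p2 (\<lambda>z. stepA a (p1 (p2 (p2 z))) (p1 (p2 z))) n (pr oc s) = iter a oc n s"
  by (induction n) (simp_all add: iter_Suc2)

lemma rc_iter: assumes "rc Oc" "rc N" "rc S"
  shows "rc (\<lambda>a x. iter a (Oc a x) (N a x) (S a x))"
proof -
  have "rc (\<lambda>a x. precf p2 (\<lambda>z. stepA a (p1 (p2 (p2 z))) (p1 (p2 z))) (N a x) (pr (Oc a x) (S a x)))"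
    by (rule rc_prec'[where F="\<lambda>a. p2" and G="\<lambda>a z. stepA a (p1 (p2 (p2 z))) (p1 (p2 z))"])
      (intro rc_stepA rcI assms)+
  then show ?thesis by (simp add: precf_iter)
qed

definition halted :: "nat \<Rightarrow> bool" where "halted s \<longleftrightarrow> p1 (p1 s) = 1 \<and> p2 s = 0"

lemma halted_iff: "halted s \<longleftrightarrow> s = pr (Rt (p2 (p1 s))) 0"
  unfolding halted_def Rt_def by (metis p1_pr p2_pr pr_p12)

lemma pc_univ: "pc (\<lambda>a z. Phi (orc a (p1 z) l) (p1 (p2 z)) (p2 (p2 z)))"
proof -
  define init where "init z = pr (Ev l (p1 (p2 z)) (p2 (p2 z))) 0" for z
  define h where "h a w = (if halted (iter a (p1 (p2 w)) (p1 w) (init (p2 w))) then 0 else (1::nat))" for a w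
  have rch: "rc h" unfolding h_def init_def halted_def Ev_def
    by (intro rc_iter rcI)+
  have pc1: "pc (\<lambda>a z. if \<exists>n. h a (pr n z) = 0 then Some (LEAST n. h a (pr n z) = 0) else None)"
    by (rule pc_mu[OF rch])
  have rco: "rc (\<lambda>a w. p2 (p1 (iter a (p1 (p2 w)) (p1 w) (init (p2 w)))))"
    unfolding init_def Ev_def by (intro rc_iter rcI)+
  have pc2: "pc (\<lambda>a x. case (if \<exists>n. h a (pr n x) = 0 then Some (LEAST n. h a (pr n x) = 0) else None) of
      None \<Rightarrow> None | Some v \<Rightarrow> Some (p2 (p1 (iter a (p1 (p2 (pr v x))) (p1 (pr v x)) (init (p2 (pr v x)))))))"
    by (rule pc_bind[OF pc1 pc_rc[OF rco]])
  have eq: "(case (if \<exists>n. h a (pr n z) = 0 then Some (LEAST n. h a (pr n z) = 0) else None) of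
      None \<Rightarrow> None | Some v \<Rightarrow> Some (p2 (p1 (iter a (p1 (p2 (pr v z))) (p1 (pr v z)) (init (p2 (pr v z)))))))
      = Phi (orc a (p1 z) l) (p1 (p2 z)) (p2 (p2 z))" for a z
  proof (cases "\<exists>n. h a (pr n z) = 0")
    case True
    define n0 where "n0 = (LEAST n. h a (pr n z) = 0)"
    have "h a (pr n0 z) = 0" using LeastI_ex[OF True] n0_def by simp
    then have hl: "halted (iter a (p1 z) n0 (init z))" unfolding h_def by (simp split: if_splits)
    let ?v = "p2 (p1 (iter a (p1 z) n0 (init z)))"
    have "iter a (p1 z) n0 (init z) = pr (Rt ?v) 0" using hl halted_iff by blast
    then have "eval (orc a (p1 z) l) (decode (p1 (p2 z))) (p2 (p2 z)) ?v"
      using machine_correct[of a "p1 z" l "p1 (p2 z)" "p2 (p2 z)" ?v] unfolding init_def by blast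
    then have "Phi (orc a (p1 z) l) (p1 (p2 z)) (p2 (p2 z)) = Some ?v" by (simp add: Phi_Some)
    then show ?thesis using True n0_def by simp
  next
    case False
    have "\<not> eval (orc a (p1 z) l) (decode (p1 (p2 z))) (p2 (p2 z)) v" for v
    proof
      assume "eval (orc a (p1 z) l) (decode (p1 (p2 z))) (p2 (p2 z)) v"
      then obtain n where "iter a (p1 z) n (init z) = pr (Rt v) 0"
        using machine_correct unfolding init_def by blast
      then have "h a (pr n z) = 0" unfolding h_def halted_def by (simp add: Rt_def)
      then show False using False by blast
    qed
    then have "Phi (orc a (p1 z) l) (p1 (p2 z)) (p2 (p2 z)) = None" by (simp add: Phi_None)
    then show ?thesis using False by simp
  qed
  show ?thesis using pc2 eq by simp
qed

lemma pc_U0: "pc (\<lambda>a z. Phi (\<lambda>n. Some (a n)) (p1 z) (p2 z))"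
proof -
  have "pc (\<lambda>a z. Phi (orc a (p1 (pr 0 z)) 0) (p1 (p2 (pr 0 z))) (p2 (p2 (pr 0 z))))"
    by (rule pc_pre[OF pc_univ]) (intro rcI)
  then show ?thesis by (simp add: orc_def)
qed

lemma pc_U1: "pc (\<lambda>a z. Phi (Phi (\<lambda>n. Some (a n)) (p1 z)) (p1 (p2 z)) (p2 (p2 z)))"
  using pc_univ[of 1] by (simp add: orc_def)


section \<open>Codes: constants and s-m-n\<close>

definition cc :: "nat \<Rightarrow> nat" where "cc n = encode (constp n)"

lemma cc_0: "cc 0 = 0" by (simp add: cc_def)
lemma cc_Suc: "cc (Suc n) = 7 + 4 * pr 1 (cc n)" by (simp add: cc_def)
lemma decode_cc[simp]: "decode (cc n) = constp n" by (simp add: cc_def)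

lemma constp_inj: "constp n = constp m \<Longrightarrow> n = m"
  by (induction n arbitrary: m) (case_tac m; simp)+

lemma cc_inj: "cc n = cc m \<Longrightarrow> n = m" by (metis decode_cc constp_inj)

lemma precf_cc: "precf (\<lambda>y. 0) (\<lambda>z. 7 + 4 * pr (Suc 0) (p1 (p2 z))) n y = cc n"
  by (induction n) (simp_all add: cc_0 cc_Suc)

lemma rc_cc[rcI]: assumes "rc h" shows "rc (\<lambda>a x. cc (h a x))"
proof -
  have "rc (\<lambda>a x. precf (\<lambda>y. 0) (\<lambda>z. 7 + 4 * pr (Suc 0) (p1 (p2 z))) (h a x) 0)"
    by (rule rc_prec'[where F="\<lambda>a y. 0"]) (intro rcI assms)+
  then show ?thesis by (simp add: precf_cc)
qed

definition smn :: "nat \<Rightarrow> nat \<Rightarrow> nat" where "smn e n = 7 + 4 * pr e (6 + 4 * pr (cc n) 2)"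

lemma decode_smn: "decode (smn e n) = Comp (decode e) (Pair (constp n) Ident)"
  unfolding smn_def by simp

lemma eval_smn: "eval \<alpha> (decode (smn e n)) x v \<longleftrightarrow> eval \<alpha> (decode e) (pr n x) v"
  by (auto simp: decode_smn)

lemma Phi_smn: "Phi \<alpha> (smn e n) x = Phi \<alpha> e (pr n x)"
  unfolding Phi_def eval_smn by simp

lemma smn_inj: "smn e n = smn e' n' \<Longrightarrow> e = e' \<and> n = n'"
  unfolding smn_def using cc_inj by auto

lemma smn_p1: "p1 ((smn e n - 7) div 4) = e" unfolding smn_def by simp

lemma rc_smn[rcI]: "rc E \<Longrightarrow> rc N \<Longrightarrow> rc (\<lambda>a x. smn (E a x) (N a x))"
  unfolding smn_def by (intro rcI)+

definition pmu :: "(orc \<Rightarrow> nat \<Rightarrow> nat option) \<Rightarrow> orc \<Rightarrow> nat \<Rightarrow> nat option" where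
  "pmu g a x = (if \<exists>n. g a (pr n x) = Some 0 \<and> (\<forall>i<n. \<exists>v. v \<noteq> 0 \<and> g a (pr i x) = Some v)
     then Some (THE n. g a (pr n x) = Some 0 \<and> (\<forall>i<n. \<exists>v. v \<noteq> 0 \<and> g a (pr i x) = Some v)) else None)"

lemma pmu_uniq: assumes "g a (pr n x) = Some 0 \<and> (\<forall>i<n. \<exists>v. v \<noteq> 0 \<and> g a (pr i x) = Some v)"
   "g a (pr m x) = Some 0 \<and> (\<forall>i<m. \<exists>v. v \<noteq> 0 \<and> g a (pr i x) = Some v)"
 shows "n = m"
proof (rule ccontr)
  assume "n \<noteq> m"
  then consider "n < m" | "m < n" by linarith
  then show False
  proof cases
    case 1
    then obtain v where "v \<noteq> 0" "g a (pr n x) = Some v" using assms(2) by blast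
    then show False using assms(1) by simp
  next
    case 2
    then obtain v where "v \<noteq> 0" "g a (pr m x) = Some v" using assms(1) by blast
    then show False using assms(2) by simp
  qed
qed

lemma pmu_Some: "pmu g a x = Some n \<longleftrightarrow> g a (pr n x) = Some 0 \<and> (\<forall>i<n. \<exists>v. v \<noteq> 0 \<and> g a (pr i x) = Some v)"
  (is "_ \<longleftrightarrow> ?P n")
proof
  assume A: "pmu g a x = Some n"
  have ex: "\<exists>n. ?P n"
  proof (rule ccontr)
    assume "\<not> (\<exists>n. ?P n)"
    then have "pmu g a x = None" unfolding pmu_def by (rule if_not_P)
    then show False using A by simp
  qed
  have "pmu g a x = Some (THE n. ?P n)" unfolding pmu_def by (rule if_P[OF ex])
  then have nd: "n = (THE n. ?P n)" using A by simp
  from ex obtain m where m: "?P m" by blast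
  have "(THE n. ?P n) = m" by (rule the_equality[of ?P m, OF m]) (rule pmu_uniq[OF _ m], assumption)
  then show "?P n" using nd m by simp
next
  assume A: "?P n"
  have "(THE n. ?P n) = n"
    by (rule the_equality[of ?P n, OF A]) (rule pmu_uniq[OF _ A], assumption)
  moreover have "pmu g a x = Some (THE n. ?P n)" unfolding pmu_def by (rule if_P) (rule exI[of _ n], rule A)
  ultimately show "pmu g a x = Some n" by simp
qed

lemma pmu_None: "pmu g a x = None \<longleftrightarrow> \<not> (\<exists>n. g a (pr n x) = Some 0 \<and> (\<forall>i<n. \<exists>v. v \<noteq> 0 \<and> g a (pr i x) = Some v))"
  unfolding pmu_def by auto

lemma pc_pmu: assumes "pc g" shows "pc (pmu g)"
proof -
  obtain G where G: "\<And>a x v. eval (\<lambda>n. Some (a n)) G x v \<longleftrightarrow> g a x = Some v" using assms unfolding pc_def by blast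
  have "eval (\<lambda>n. Some (a n)) (Mu G) x n \<longleftrightarrow> pmu g a x = Some n" for a x n
    by (simp add: ev_Mu G pmu_Some)
  then show ?thesis unfolding pc_def by blast
qed

lemma pc_post: assumes "pc g" "rc h" shows "pc (\<lambda>a x. map_option (\<lambda>v. h a (pr v x)) (g a x))"
proof -
  have "pc (\<lambda>a x. case g a x of None \<Rightarrow> None | Some v \<Rightarrow> Some (h a (pr v x)))"
    by (rule pc_bind[OF assms(1) pc_rc[OF assms(2)]])
  moreover have "(\<lambda>a x. case g a x of None \<Rightarrow> None | Some v \<Rightarrow> Some (h a (pr v x))) = (\<lambda>a x. map_option (\<lambda>v. h a (pr v x)) (g a x))"
    by (rule ext)+ (simp split: option.splits)
  ultimately show ?thesis by simp
qed

lemma precf_iterG: "precf p2 (\<lambda>z. nstep (Ans (pr (p1 (p1 (p2 (p2 z)))) (qry (p1 (p2 z))))) (p2 (p1 (p2 (p2 z)))) (p1 (p2 z)))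
   n (pr (pr P oc) s) = iter (\<lambda>q. Ans (pr P q)) oc n s"
  by (induction n) (simp_all add: iter_Suc2 stepA_def)

lemma rc_iterG: assumes "rc Ans" "rc Pm" "rc Oc" "rc N" "rc S"
  shows "rc (\<lambda>a x. iter (\<lambda>q. Ans a (pr (Pm a x) q)) (Oc a x) (N a x) (S a x))"
proof -
  have "rc (\<lambda>a x. precf p2 (\<lambda>z. nstep (Ans a (pr (p1 (p1 (p2 (p2 z)))) (qry (p1 (p2 z))))) (p2 (p1 (p2 (p2 z)))) (p1 (p2 z)))
      (N a x) (pr (pr (Pm a x) (Oc a x)) (S a x)))"
    by (rule rc_prec'[where F="\<lambda>a. p2"]) (intro rc_nstep rcI assms rc_comp[OF assms(1)] | simp only: qry_def)+
  then show ?thesis by (simp add: precf_iterG)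
qed

lemma iter_agree:
  "(\<forall>k<N. isq (iter A oc k S) \<longrightarrow> A (qry (iter A oc k S)) = B (qry (iter A oc k S))) \<Longrightarrow>
   iter A oc N S = iter B oc N S"
proof (induction N)
  case 0 then show ?case by simp
next
  case (Suc N)
  then have IH: "iter A oc N S = iter B oc N S" by auto
  show ?case
  proof (cases "isq (iter A oc N S)")
    case True
    then have "A (qry (iter A oc N S)) = B (qry (iter A oc N S))" using Suc.prems by auto
    then show ?thesis using IH by (simp add: iter_Suc2 stepA_def)
  next
    case False
    then show ?thesis using IH by (simp add: iter_Suc2 stepA_def nstep_noq[of _ "A (qry _)" _ "B (qry _)"])
  qed
qed

lemma halted_mono: "halted (iter A oc n S) \<Longrightarrow> n \<le> m \<Longrightarrow> halted (iter A oc m S)"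
proof -
  assume h: "halted (iter A oc n S)" and nm: "n \<le> m"
  have "iter A oc m S = iter A oc (m - n) (iter A oc n S)" using nm iter_add[of A oc n "m - n" S] by simp
  also have "\<dots> = iter A oc n S" using h halted_iff iter_halt by metis
  finally show ?thesis using h by simp
qed

lemma halts_iff: "Phi (\<lambda>n. Some (A n)) e x \<noteq> None \<longleftrightarrow> (\<exists>n. halted (iter A oc n (pr (Ev 0 e x) 0)))"
proof
  assume "Phi (\<lambda>n. Some (A n)) e x \<noteq> None"
  then obtain v where "eval (orc A oc 0) (decode e) x v" by (auto simp: Phi_None orc_def)
  then obtain n where "iter A oc n (pr (Ev 0 e x) 0) = pr (Rt v) 0" using machine_correct by blast
  then have "halted (iter A oc n (pr (Ev 0 e x) 0))" by (simp add: halted_def Rt_def)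
  then show "\<exists>n. halted (iter A oc n (pr (Ev 0 e x) 0))" by blast
next
  assume "\<exists>n. halted (iter A oc n (pr (Ev 0 e x) 0))"
  then obtain n where "halted (iter A oc n (pr (Ev 0 e x) 0))" by blast
  then have "iter A oc n (pr (Ev 0 e x) 0) = pr (Rt (p2 (p1 (iter A oc n (pr (Ev 0 e x) 0))))) 0"
    using halted_iff by blast
  then have "eval (orc A oc 0) (decode e) x (p2 (p1 (iter A oc n (pr (Ev 0 e x) 0))))"
    using machine_correct by blast
  then show "Phi (\<lambda>n. Some (A n)) e x \<noteq> None" by (auto simp: Phi_None orc_def)
qed


definition cst :: "nat \<Rightarrow> pfun" where "cst n = (\<lambda>x. Some n)"

lemma pc_in_B: assumes "pc g" shows "(\<lambda>x. g (chr X) x) \<in> B_carrier X"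
proof -
  obtain e where "\<forall>a x. Phi (\<lambda>n. Some (a n)) e x = g a x" using pc_code[OF assms] by blast
  then have "(\<lambda>x. g (chr X) x) = Phi (chi X) e" by (auto simp: chi_chr)
  then show ?thesis unfolding B_carrier_def computable_in_def by blast
qed

lemma rc_in_B: "rc h \<Longrightarrow> (\<lambda>x. Some (h (chr X) x)) \<in> B_carrier X"
  using pc_in_B[OF pc_rc] by blast

lemma cst_in_B: "cst n \<in> B_carrier X"
  using rc_in_B[of "\<lambda>a x. n" X] by (simp add: cst_def rc_const)

lemma Phi_in_B: "Phi (chi X) e \<in> B_carrier X"
  unfolding B_carrier_def computable_in_def by blast

lemma join_total: "join (\<lambda>x. Some (f x)) (\<lambda>x. Some (g x)) = (\<lambda>k. Some (if even k then f (k div 2) else g (k div 2)))"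
  by (rule ext) (simp add: join_def)

section \<open>Approximating the jump\<close>

definition Xs :: "(nat \<Rightarrow> nat) \<Rightarrow> nat \<Rightarrow> nat \<Rightarrow> nat" where
  "Xs A s i = (if halted (iter A 0 s (pr (Ev 0 i i) 0)) then 1 else 0)"

definition Hh :: "(nat \<Rightarrow> nat) \<Rightarrow> nat \<Rightarrow> nat \<Rightarrow> nat \<Rightarrow> bool" where
  "Hh A e N s \<longleftrightarrow> halted (iter (Xs A s) 0 N (pr (Ev 0 e e) 0))"

definition thetaf :: "(nat \<Rightarrow> nat) \<Rightarrow> nat \<Rightarrow> nat \<Rightarrow> nat option" where
  "thetaf A e z = (if \<exists>s'. \<not> Hh A e (p1 z) (p2 z + s') then Some 0 else None)"

definition Jset :: "(nat \<Rightarrow> nat) \<Rightarrow> nat set" where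
  "Jset A = {i. Phi (\<lambda>n. Some (A n)) i i \<noteq> None}"

lemma Xs_01: "Xs A s i = 1 \<or> Xs A s i = 0" by (simp add: Xs_def)

lemma Xs_mono: "Xs A s i = 1 \<Longrightarrow> s \<le> s' \<Longrightarrow> Xs A s' i = 1"
  unfolding Xs_def using halted_mono by (metis zero_neq_one)

lemma Xs_J: "(\<exists>s. Xs A s i = 1) \<longleftrightarrow> i \<in> Jset A"
  unfolding Jset_def Xs_def using halts_iff[of A i i 0] by auto

lemma Xs_conv: "\<exists>s0. \<forall>s\<ge>s0. Xs A s q = chr (Jset A) q"
proof (cases "q \<in> Jset A")
  case True
  then obtain s0 where "Xs A s0 q = 1" using Xs_J by blast
  then have "\<forall>s\<ge>s0. Xs A s q = 1" using Xs_mono by blast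
  then show ?thesis using True by (auto simp: chr_def)
next
  case False
  then have "Xs A s q = 0" for s using Xs_J Xs_01 by metis
  then show ?thesis using False by (auto simp: chr_def)
qed

lemma Xs_conv_fin: "finite Q \<Longrightarrow> \<exists>s0. \<forall>s\<ge>s0. \<forall>q\<in>Q. Xs A s q = chr (Jset A) q"
proof (induction Q rule: finite_induct)
  case empty then show ?case by simp
next
  case (insert q Q)
  obtain s1 where s1: "\<forall>s\<ge>s1. \<forall>q\<in>Q. Xs A s q = chr (Jset A) q" using insert.IH by blast
  obtain s2 where s2: "\<forall>s\<ge>s2. Xs A s q = chr (Jset A) q" using Xs_conv by blast
  show ?case using s1 s2 by (intro exI[of _ "max s1 s2"]) auto
qed

lemma iter_conv: "\<exists>s0. \<forall>s\<ge>s0. iter (Xs A s) 0 N S = iter (chr (Jset A)) 0 N S"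
proof -
  let ?Q = "(\<lambda>k. qry (iter (chr (Jset A)) 0 k S)) ` {..<N}"
  obtain s0 where s0: "\<forall>s\<ge>s0. \<forall>q\<in>?Q. Xs A s q = chr (Jset A) q" using Xs_conv_fin[of ?Q A] by blast
  have "iter (chr (Jset A)) 0 N S = iter (Xs A s) 0 N S" if "s \<ge> s0" for s
    by (rule iter_agree) (use s0 that in auto)
  then show ?thesis by metis
qed

lemma jump2_char: "Phi (\<lambda>n. Some (chr (Jset A) n)) e e \<noteq> None \<longleftrightarrow> (\<exists>N s0. \<forall>s\<ge>s0. Hh A e N s)"
proof
  assume "Phi (\<lambda>n. Some (chr (Jset A) n)) e e \<noteq> None"
  then obtain N where N: "halted (iter (chr (Jset A)) 0 N (pr (Ev 0 e e) 0))" using halts_iff by blast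
  obtain s0 where "\<forall>s\<ge>s0. iter (Xs A s) 0 N (pr (Ev 0 e e) 0) = iter (chr (Jset A)) 0 N (pr (Ev 0 e e) 0)"
    using iter_conv by blast
  then have "\<forall>s\<ge>s0. Hh A e N s" using N by (simp add: Hh_def)
  then show "\<exists>N s0. \<forall>s\<ge>s0. Hh A e N s" by blast
next
  assume "\<exists>N s0. \<forall>s\<ge>s0. Hh A e N s"
  then obtain N s0 where H: "\<forall>s\<ge>s0. Hh A e N s" by blast
  obtain s1 where s1: "\<forall>s\<ge>s1. iter (Xs A s) 0 N (pr (Ev 0 e e) 0) = iter (chr (Jset A)) 0 N (pr (Ev 0 e e) 0)"
    using iter_conv by blast
  have "halted (iter (chr (Jset A)) 0 N (pr (Ev 0 e e) 0))"
    using H[rule_format, of "max s0 s1"] s1[rule_format, of "max s0 s1"] by (simp add: Hh_def)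
  then show "Phi (\<lambda>n. Some (chr (Jset A) n)) e e \<noteq> None" using halts_iff by blast
qed

lemma thetaf_cst: "thetaf A e = cst 0 \<longleftrightarrow> Phi (\<lambda>n. Some (chr (Jset A) n)) e e = None"
proof -
  have "thetaf A e = cst 0 \<longleftrightarrow> (\<forall>z. \<exists>s'. \<not> Hh A e (p1 z) (p2 z + s'))"
    unfolding thetaf_def cst_def by (auto simp: fun_eq_iff split: if_splits)
  also have "\<dots> \<longleftrightarrow> (\<forall>N s0. \<exists>s'. \<not> Hh A e N (s0 + s'))"
    by (metis p1_pr p2_pr)
  also have "\<dots> \<longleftrightarrow> \<not> (\<exists>N s0. \<forall>s\<ge>s0. Hh A e N s)"
    by (metis le_add1 le_add_diff_inverse)
  also have "\<dots> \<longleftrightarrow> Phi (\<lambda>n. Some (chr (Jset A) n)) e e = None" using jump2_char by blast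
  finally show ?thesis .
qed

definition tr :: "nat \<Rightarrow> nat \<Rightarrow> (nat \<Rightarrow> nat) \<Rightarrow> nat \<Rightarrow> nat" where "tr m c a k = a (m * k + c)"

lemma rc_iterT: assumes "rc Oc" "rc N" "rc S"
  shows "rc (\<lambda>a x. iter (tr m c a) (Oc a x) (N a x) (S a x))"
proof -
  have "rc (\<lambda>a x. iter (\<lambda>q. (\<lambda>a w. a (m * p2 w + c)) a (pr 0 q)) (Oc a x) (N a x) (S a x))"
    by (rule rc_iterG) (intro rcI assms)+
  moreover have "(\<lambda>q. (\<lambda>a w. a (m * p2 w + c)) a (pr 0 q)) = tr m c a" for a
    by (rule ext) (simp add: tr_def)
  ultimately show ?thesis by simp
qed

lemma rc_Xs: assumes "rc S" "rc I"
  shows "rc (\<lambda>a x. Xs (tr m c a) (S a x) (I a x))"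
  unfolding Xs_def halted_def Ev_def by (intro rc_iterT rcI assms)+

lemma rc_Hh: assumes "rc E" "rc N" "rc S"
  shows "rcp (\<lambda>a x. Hh (tr m c a) (E a x) (N a x) (S a x))"
proof -
  have "rc (\<lambda>a x. iter (\<lambda>q. (\<lambda>a w. Xs (tr m c a) (p1 w) (p2 w)) a (pr (S a x) q)) 0 (N a x) (pr (Ev 0 (E a x) (E a x)) 0))"
    by (rule rc_iterG) (intro rc_Xs rcI assms | simp only: Ev_def)+
  then have "rc (\<lambda>a x. iter (Xs (tr m c a) (S a x)) 0 (N a x) (pr (Ev 0 (E a x) (E a x)) 0))" by simp
  then have "rcp (\<lambda>a x. halted (iter (Xs (tr m c a) (S a x)) 0 (N a x) (pr (Ev 0 (E a x) (E a x)) 0)))"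
    unfolding halted_def by (intro rcI rc_p1 rc_p2 | assumption)+
  then show ?thesis unfolding Hh_def .
qed

lemma pc_theta: assumes "rc E" "rc Z"
  shows "pc (\<lambda>a x. thetaf (tr m c a) (E a x) (Z a x))"
proof -
  define h where "h a w = (if Hh (tr m c a) (E a (p2 w)) (p1 (Z a (p2 w))) (p2 (Z a (p2 w)) + p1 w) then 1 else (0::nat))" for a w
  have rch: "rc h" unfolding h_def
    by (intro rc_if rc_Hh rcI rc_comp[OF assms(1)] rc_comp[OF assms(2)])+
  have "pc (\<lambda>a x. map_option (\<lambda>v. (\<lambda>a x. 0) a (pr v x)) (if \<exists>n. h a (pr n x) = 0 then Some (LEAST n. h a (pr n x) = 0) else None))"
    by (rule pc_post[OF pc_mu[OF rch]]) (intro rcI)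
  moreover have "map_option (\<lambda>v. (\<lambda>a x. 0) a (pr v x)) (if \<exists>n. h a (pr n x) = 0 then Some (LEAST n. h a (pr n x) = 0) else None)
     = thetaf (tr m c a) (E a x) (Z a x)" for a x
    unfolding thetaf_def h_def by auto
  ultimately show ?thesis by simp
qed


lemma tr10: "tr 1 0 a = a" by (rule ext) (simp add: tr_def)
lemma tr10': "tr (Suc 0) 0 a = a" by (rule ext) (simp add: tr_def)

lemma jump_Jset: "Jset (chr X) = jump X"
  unfolding Jset_def jump_def by (simp add: chi_chr)

lemma forward:
  assumes emb: "pca_embedding (B_carrier X) B_app K1_carrier (K1_app Y) f"
  shows "jump (jump X) \<le>\<^sub>T Y"
proof -
  have injf: "inj_on f (B_carrier X)" and
    hom: "\<And>a b c. a \<in> B_carrier X \<Longrightarrow> b \<in> B_carrier X \<Longrightarrow> B_app a b = Some c \<Longrightarrow> K1_app Y (f a) (f b) = Some (f c)"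
    using emb unfolding pca_embedding_def by blast+
  have "rc (\<lambda>a k. Suc (a 1))" by (intro rcI)+
  then obtain es where es: "\<And>a k. Phi (\<lambda>n. Some (a n)) es k = Some (Suc (a 1))"
    using rc_code by blast
  have app_s: "B_app (cst es) (cst n) = Some (cst (Suc n))" for n
  proof -
    have j: "join (\<lambda>x. Some es) (\<lambda>x. Some n) = (\<lambda>k. Some (if even k then es else n))"
      using join_total[of "\<lambda>x. es" "\<lambda>x. n"] by simp
    show ?thesis unfolding B_app_def cst_def by (simp add: j es)
  qed
  have stepY: "eval (chi Y) (decode (f (cst es))) (f (cst n)) (f (cst (Suc n)))" for n
    using hom[OF cst_in_B cst_in_B app_s] by (simp add: K1_app_def Phi_Some)
  define RP where "RP = Rec (constp (f (cst 0))) (Comp (decode (f (cst es))) (Comp Fst Snd))"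
  have RPev: "eval (chi Y) RP (pr n 0) (f (cst n))" for n
  proof (induction n)
    case 0 show ?case unfolding RP_def by (subst ev_Rec0) simp
  next
    case (Suc n)
    then show ?case unfolding RP_def using stepY[of n] by auto
  qed
  define FP where "FP = Comp RP (Pair Ident Zero)"
  have FPev: "eval (chi Y) FP e (f (cst e))" for e
    unfolding FP_def using RPev[of e] by auto
  have "rc (\<lambda>a x. a 1)" by (intro rcI)+
  then obtain eu where eu: "\<And>b z. Phi (\<lambda>n. Some (b n)) eu z = thetaf (tr 2 2 b) (b 1) z"
    using pc_code[OF pc_theta[OF _ rc_id, of "\<lambda>a x. a 1" 2 2]] by blast
  obtain et where et0: "\<And>a w. Phi (\<lambda>n. Some (a n)) et w = thetaf (tr 1 0 a) (p1 w) (p2 w)"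
    using pc_code[OF pc_theta[OF rc_p1[OF rc_id] rc_p2[OF rc_id], of 1 0]] by blast
  have et: "\<And>a w. Phi (\<lambda>n. Some (a n)) et w = thetaf a (p1 w) (p2 w)" using et0 by (simp add: tr10 tr10')
  define th where "th e = thetaf (chr X) e" for e
  have th_B: "th e \<in> B_carrier X" for e
  proof -
    have "th e = Phi (chi X) (smn et e)" unfolding th_def by (rule ext) (simp add: Phi_smn chi_chr et)
    then show ?thesis using Phi_in_B by simp
  qed
  define u :: pfun where "u = (\<lambda>k. Some (if k = 0 then eu else chr X (k - 1)))"
  have u_B: "u \<in> B_carrier X"
  proof -
    have "rc (\<lambda>a k. if k = 0 then eu else a (k - 1))" by (intro rcI)+
    from rc_in_B[OF this, of X] show ?thesis by (simp add: u_def)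
  qed
  have app_u: "B_app u (cst e) = Some (th e)" for e
  proof -
    define bb where "bb k = (if even k then (if k div 2 = 0 then eu else chr X (k div 2 - 1)) else e)" for k
    have j: "join u (cst e) = (\<lambda>k. Some (bb k))"
      unfolding u_def cst_def bb_def by (simp add: join_total)
    have t: "tr 2 2 bb = chr X" by (rule ext) (simp add: tr_def bb_def)
    have b1: "bb (Suc 0) = e" by (simp add: bb_def)
    show ?thesis unfolding B_app_def th_def j by (simp add: u_def eu t b1)
  qed
  have thY: "eval (chi Y) (decode (f u)) (f (cst e)) (f (th e))" for e
    using hom[OF u_B cst_in_B app_u] by (simp add: K1_app_def Phi_Some)
  have th_iff: "th e = cst 0 \<longleftrightarrow> e \<notin> jump (jump X)" for e
    unfolding th_def thetaf_cst jump_Jset by (simp add: jump_def chi_chr)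
  have "rc (\<lambda>a x. if x = f (cst 0) then 0 else (1::nat))" by (intro rcI)+
  then obtain CP where CP: "\<And>a x v. eval (\<lambda>n. Some (a n)) CP x v \<longleftrightarrow> v = (if x = f (cst 0) then 0 else 1)"
    using rc_prog by blast
  define PP where "PP = Comp CP (Comp (decode (f u)) FP)"
  obtain ep where ep: "decode ep = PP" using decode_surj by blast
  have "Phi (chi Y) ep e = chi (jump (jump X)) e" for e
  proof -
    have "eval (chi Y) PP e (if f (th e) = f (cst 0) then 0 else 1)"
      unfolding PP_def using FPev[of e] thY[of e] CP[of "chr Y"] by (auto simp: chi_chr)
    moreover have "(f (th e) = f (cst 0)) \<longleftrightarrow> th e = cst 0"
      by (rule inj_on_eq_iff[OF injf th_B cst_in_B])
    ultimately have "Phi (chi Y) ep e = Some (if e \<in> jump (jump X) then 1 else 0)"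
      using th_iff by (cases "e \<in> jump (jump X)") (simp_all add: Phi_Some ep)
    then show ?thesis by (simp add: chi_def)
  qed
  then show ?thesis unfolding turing_le_def computable_in_def by (metis ext)
qed


lemma pmu_least:
  assumes g: "\<And>i. g a (pr i x) = Some (if P i then 0 else 1)" and k: "P k"
  shows "pmu g a x = Some (LEAST i. P i)"
proof -
  let ?L = "LEAST i. P i"
  have PL: "P ?L" using k by (rule LeastI)
  have A: "g a (pr ?L x) = Some 0" using g[of ?L] PL by simp
  have B: "\<forall>i<?L. \<exists>v. v \<noteq> 0 \<and> g a (pr i x) = Some v"
  proof (intro allI impI)
    fix i assume "i < ?L"
    then have "\<not> P i" by (rule not_less_Least)
    then show "\<exists>v. v \<noteq> 0 \<and> g a (pr i x) = Some v" using g[of i] by (intro exI[of _ 1]) simp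
  qed
  show ?thesis unfolding pmu_Some using A B by (rule conjI)
qed

lemma Phi_chi_jump: "Phi (chi (jump X)) e x = Phi (\<lambda>n. Some (chr (jump X) n)) e x" by (simp add: chi_chr)

definition u0c :: nat where
  "u0c = (SOME e. \<forall>a w. Phi (\<lambda>n. Some (a n)) e w = Phi (\<lambda>n. Some (a n)) (p1 (p1 w)) (p2 (p1 w)))"

lemma u0c: "Phi (\<lambda>n. Some (a n)) u0c w = Phi (\<lambda>n. Some (a n)) (p1 (p1 w)) (p2 (p1 w))"
proof -
  have "pc (\<lambda>a w. Phi (\<lambda>n. Some (a n)) (p1 (p1 w)) (p2 (p1 w)))"
    using pc_pre[OF pc_U0, of "\<lambda>a w. p1 w"] rc_p1[OF rc_id] by simp
  from pc_code[OF this] show ?thesis unfolding u0c_def by (rule someI_ex[where P="\<lambda>e. \<forall>a w. Phi (\<lambda>n. Some (a n)) e w = Phi (\<lambda>n. Some (a n)) (p1 (p1 w)) (p2 (p1 w))", THEN spec, THEN spec])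
qed

definition hcode :: "nat \<Rightarrow> nat \<Rightarrow> nat" where "hcode i x = smn u0c (pr i x)"

lemma hcode_jump: "hcode i x \<in> jump X \<longleftrightarrow> Phi (chi X) i x \<noteq> None"
  unfolding jump_def hcode_def by (simp add: Phi_smn chi_chr u0c)

definition g0c :: nat where
  "g0c = (SOME e. \<forall>a w. Phi (\<lambda>n. Some (a n)) e w = (if a (p1 w) = 1 then Some 0 else None))"

lemma g0c: "Phi (\<lambda>n. Some (a n)) g0c w = (if a (p1 w) = 1 then Some 0 else None)"
proof -
  define h where "h (a::nat\<Rightarrow>nat) w = (if a (p1 (p2 w)) = 1 then 0 else (1::nat))" for a w
  have "rc h" unfolding h_def by (intro rcI)+
  then have "pc (\<lambda>a x. if \<exists>n. h a (pr n x) = 0 then Some (LEAST n. h a (pr n x) = 0) else None)" by (rule pc_mu)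
  moreover have "(if \<exists>n. h a (pr n x) = 0 then Some (LEAST n. h a (pr n x) = 0) else None) = (if a (p1 x) = 1 then Some 0 else None)" for a x
    unfolding h_def by auto
  ultimately have "pc (\<lambda>a w. if a (p1 w) = 1 then Some 0 else None)" by simp
  from pc_code[OF this] show ?thesis unfolding g0c_def by (rule someI_ex[where P="\<lambda>e. \<forall>a w. Phi (\<lambda>n. Some (a n)) e w = (if a (p1 w) = 1 then Some 0 else None)", THEN spec, THEN spec])
qed

lemma gcode_jump: "smn g0c k \<in> jump X \<longleftrightarrow> k \<in> X"
  unfolding jump_def by (simp add: Phi_smn chi_chr g0c chr_def)

definition oXc :: nat where
  "oXc = (SOME e. \<forall>a k. Phi (\<lambda>n. Some (a n)) e k = Some (a (smn g0c k)))"

lemma oXc: "Phi (\<lambda>n. Some (a n)) oXc k = Some (a (smn g0c k))"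
proof -
  have "rc (\<lambda>a k. a (smn g0c k))" by (intro rcI)+
  from rc_code[OF this] show ?thesis unfolding oXc_def by (rule someI_ex[where P="\<lambda>e. \<forall>a k. Phi (\<lambda>n. Some (a n)) e k = Some (a (smn g0c k))", THEN spec, THEN spec])
qed

lemma oXc_jump: "Phi (chi (jump X)) oXc = chi X"
  by (rule ext) (simp add: chi_chr oXc chr_def gcode_jump)

section \<open>The disagreement search, relative to the jump\<close>

definition cI :: "nat \<Rightarrow> nat" where "cI w = p1 (p1 (p2 w))"
definition cJ :: "nat \<Rightarrow> nat" where "cJ w = p2 (p1 (p2 w))"

definition AG :: "orc \<Rightarrow> nat \<Rightarrow> nat option" where
  "AG a w = (if (if a (hcode (cI w) (p1 w)) = 1 \<and> a (hcode (cJ w) (p1 w)) = 1 then 1 else (0::nat)) = 0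
     then Some (if a (hcode (cI w) (p1 w)) = a (hcode (cJ w) (p1 w)) then 1 else 0)
     else (case Phi (Phi (\<lambda>n. Some (a n)) oXc) (cI w) (p1 w) of None \<Rightarrow> None
           | Some vi \<Rightarrow> (case Phi (Phi (\<lambda>n. Some (a n)) oXc) (cJ w) (p1 w) of None \<Rightarrow> None
           | Some vj \<Rightarrow> Some (if vi = vj then 1 else 0))))"

lemma pc_AG: "pc AG"
proof -
  have pcU1: "pc (\<lambda>a w. Phi (Phi (\<lambda>n. Some (a n)) oXc) (H a w) (K a w))" if "rc H" "rc K" for H K
    using pc_pre[OF pc_U1, of "\<lambda>a w. pr oXc (pr (H a w) (K a w))"] that by (simp add: rcI)
  have g1: "pc (\<lambda>a w. Phi (Phi (\<lambda>n. Some (a n)) oXc) (cI w) (p1 w))"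
    unfolding cI_def by (rule pcU1) (intro rcI)+
  have g2: "pc (\<lambda>a w. Phi (Phi (\<lambda>n. Some (a n)) oXc) (cJ (p2 w)) (p1 (p2 w)))"
    unfolding cJ_def by (rule pcU1) (intro rcI)+
  have g3: "pc (\<lambda>a w. Some (if p1 (p2 w) = p1 w then 1 else 0))" by (rule pc_rc) (intro rcI)+
  have gb: "pc (\<lambda>a w. case Phi (Phi (\<lambda>n. Some (a n)) oXc) (cI w) (p1 w) of None \<Rightarrow> None
           | Some vi \<Rightarrow> (case Phi (Phi (\<lambda>n. Some (a n)) oXc) (cJ w) (p1 w) of None \<Rightarrow> None
           | Some vj \<Rightarrow> Some (if vi = vj then 1 else 0)))"
  proof -
    have eq: "(\<lambda>a x. case Phi (Phi (\<lambda>n. Some (a n)) oXc) (cI x) (p1 x) of None \<Rightarrow> None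
             | Some v \<Rightarrow> (case Phi (Phi (\<lambda>n. Some (a n)) oXc) (cJ (p2 (pr v x))) (p1 (p2 (pr v x))) of
                 None \<Rightarrow> None | Some va \<Rightarrow> Some (if p1 (p2 (pr va (pr v x))) = p1 (pr va (pr v x)) then 1 else 0))) =
       (\<lambda>a w. case Phi (Phi (\<lambda>n. Some (a n)) oXc) (cI w) (p1 w) of None \<Rightarrow> None
           | Some vi \<Rightarrow> (case Phi (Phi (\<lambda>n. Some (a n)) oXc) (cJ w) (p1 w) of None \<Rightarrow> None
           | Some vj \<Rightarrow> Some (if vi = vj then 1 else 0)))"
      by (intro ext) (simp split: option.split)
    show ?thesis using pc_bind[OF g1 pc_bind[OF g2 g3]] unfolding eq .
  qed
  have "pc (\<lambda>a w. if (if a (hcode (cI w) (p1 w)) = 1 \<and> a (hcode (cJ w) (p1 w)) = 1 then 1 else (0::nat)) = 0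
     then Some (if a (hcode (cI w) (p1 w)) = a (hcode (cJ w) (p1 w)) then 1 else 0)
     else (case Phi (Phi (\<lambda>n. Some (a n)) oXc) (cI w) (p1 w) of None \<Rightarrow> None
           | Some vi \<Rightarrow> (case Phi (Phi (\<lambda>n. Some (a n)) oXc) (cJ w) (p1 w) of None \<Rightarrow> None
           | Some vj \<Rightarrow> Some (if vi = vj then 1 else 0))))"
    by (rule pc_lif[OF _ _ gb]) (intro rcI | unfold hcode_def cI_def cJ_def)+
  then show ?thesis unfolding AG_def[abs_def] .
qed

lemma AG_jump: "AG (chr (jump X)) w = Some (if Phi (chi X) (cI w) (p1 w) = Phi (chi X) (cJ w) (p1 w) then 1 else 0)"
proof -
  have U: "Phi (Phi (\<lambda>n. Some (chr (jump X) n)) oXc) = Phi (chi X)"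
    using oXc_jump[of X] by (simp add: chi_chr)
  have h: "chr (jump X) (hcode i x) = (if Phi (chi X) i x \<noteq> None then 1 else 0)" for i x
    by (simp add: chr_def hcode_jump)
  show ?thesis unfolding AG_def U h by (auto split: option.splits)
qed

definition Dc :: nat where "Dc = (SOME e. \<forall>a y. Phi (\<lambda>n. Some (a n)) e y = pmu AG a y)"

lemma Dc: "Phi (\<lambda>n. Some (a n)) Dc y = pmu AG a y"
  using pc_code[OF pc_pmu[OF pc_AG]] unfolding Dc_def
  by (rule someI_ex[where P="\<lambda>e. \<forall>a y. Phi (\<lambda>n. Some (a n)) e y = pmu AG a y", THEN spec, THEN spec])

lemma D_jump: "smn Dc (pr i j) \<in> jump (jump X) \<longleftrightarrow> Phi (chi X) i \<noteq> Phi (chi X) j"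
proof -
  let ?y = "pr (pr i j) (smn Dc (pr i j))"
  have "smn Dc (pr i j) \<in> jump (jump X) \<longleftrightarrow> pmu AG (chr (jump X)) ?y \<noteq> None"
    unfolding jump_def[of "jump X"] by (simp add: Phi_smn Phi_chi_jump Dc)
  also have "\<dots> \<longleftrightarrow> (\<exists>n. Phi (chi X) i n \<noteq> Phi (chi X) j n)"
  proof
    assume "pmu AG (chr (jump X)) ?y \<noteq> None"
    then obtain n where "AG (chr (jump X)) (pr n ?y) = Some 0" by (metis option.exhaust pmu_Some)
    then show "\<exists>n. Phi (chi X) i n \<noteq> Phi (chi X) j n" by (auto simp: AG_jump cI_def cJ_def split: if_splits)
  next
    assume "\<exists>n. Phi (chi X) i n \<noteq> Phi (chi X) j n"
    then obtain k where k: "Phi (chi X) i k \<noteq> Phi (chi X) j k" by blast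
    have "pmu AG (chr (jump X)) ?y = Some (LEAST n. Phi (chi X) i n \<noteq> Phi (chi X) j n)"
      by (rule pmu_least[where P="\<lambda>n. Phi (chi X) i n \<noteq> Phi (chi X) j n", OF _ k]) (auto simp: AG_jump cI_def cJ_def)
    then show "pmu AG (chr (jump X)) ?y \<noteq> None" by simp
  qed
  also have "\<dots> \<longleftrightarrow> Phi (chi X) i \<noteq> Phi (chi X) j" by auto
  finally show ?thesis .
qed


lemma pc_cong: "pc g \<Longrightarrow> (\<And>a x. g a x = h a x) \<Longrightarrow> pc h"
proof -
  assume "pc g" "\<And>a x. g a x = h a x"
  then have "g = h" by (intro ext)
  then show "pc h" using \<open>pc g\<close> by simp
qed

definition Jc :: nat where
  "Jc = (SOME e. \<forall>a w. Phi (\<lambda>n. Some (a n)) e w =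
     Phi (\<lambda>n. Some (a n)) (if p2 w mod 2 = 0 then p1 (p1 w) else p2 (p1 w)) (p2 w div 2))"

lemma Jc: "Phi (\<lambda>n. Some (a n)) Jc w = Phi (\<lambda>n. Some (a n)) (if p2 w mod 2 = 0 then p1 (p1 w) else p2 (p1 w)) (p2 w div 2)"
proof -
  have "rc (\<lambda>a w. pr (if p2 w mod 2 = 0 then p1 (p1 w) else p2 (p1 w)) (p2 w div 2))"
    by (intro rcI zero_less_numeral)+
  from pc_pre[OF pc_U0 this] have "pc (\<lambda>a w. Phi (\<lambda>n. Some (a n)) (if p2 w mod 2 = 0 then p1 (p1 w) else p2 (p1 w)) (p2 w div 2))"
    by simp
  from pc_code[OF this] show ?thesis unfolding Jc_def
    by (rule someI_ex[where P="\<lambda>e. \<forall>a w. Phi (\<lambda>n. Some (a n)) e w =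
     Phi (\<lambda>n. Some (a n)) (if p2 w mod 2 = 0 then p1 (p1 w) else p2 (p1 w)) (p2 w div 2)", THEN spec, THEN spec])
qed

lemma Jc_join: "Phi (chi X) (smn Jc (pr i m)) = join (Phi (chi X) i) (Phi (chi X) m)"
  by (rule ext) (simp add: Phi_smn chi_chr Jc join_def even_iff_mod_2_eq_zero)

definition Afun :: "orc \<Rightarrow> nat \<Rightarrow> nat option" where
  "Afun a w = (case Phi (\<lambda>n. Some (a n)) (p1 (p1 w)) 0 of None \<Rightarrow> None
     | Some e \<Rightarrow> Phi (Phi (\<lambda>n. Some (a n)) (smn Jc (p1 w))) e (p2 w))"

lemma pc_Afun: "pc Afun"
proof -
  have g1: "pc (\<lambda>a w. Phi (\<lambda>n. Some (a n)) (p1 (pr (p1 (p1 w)) 0)) (p2 (pr (p1 (p1 w)) 0)))"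
    by (rule pc_pre[OF pc_U0]) (intro rcI)+
  have g2: "pc (\<lambda>a w. Phi (Phi (\<lambda>n. Some (a n)) (p1 (pr (smn Jc (p1 (p2 w))) (pr (p1 w) (p2 (p2 w))))))
     (p1 (p2 (pr (smn Jc (p1 (p2 w))) (pr (p1 w) (p2 (p2 w)))))) (p2 (p2 (pr (smn Jc (p1 (p2 w))) (pr (p1 w) (p2 (p2 w)))))))"
    by (rule pc_pre[OF pc_U1]) (intro rcI)+
  show ?thesis by (rule pc_cong[OF pc_bind[OF g1 g2]]) (simp add: Afun_def split: option.split)
qed

definition Ac :: nat where "Ac = (SOME e. \<forall>a w. Phi (\<lambda>n. Some (a n)) e w = Afun a w)"

lemma Ac: "Phi (\<lambda>n. Some (a n)) Ac w = Afun a w"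
  using pc_code[OF pc_Afun] unfolding Ac_def
  by (rule someI_ex[where P="\<lambda>e. \<forall>a w. Phi (\<lambda>n. Some (a n)) e w = Afun a w", THEN spec, THEN spec])

definition appidx :: "nat \<Rightarrow> nat \<Rightarrow> nat" where "appidx i m = smn Ac (pr i m)"

lemma appidx_correct: "Phi (chi X) (appidx i m) =
   (\<lambda>n. case Phi (chi X) i 0 of None \<Rightarrow> None | Some e \<Rightarrow> Phi (join (Phi (chi X) i) (Phi (chi X) m)) e n)"
proof (rule ext)
  fix n
  have "Phi (chi X) (appidx i m) n = Afun (chr X) (pr (pr i m) n)"
    unfolding appidx_def by (simp add: Phi_smn chi_chr Ac)
  also have "\<dots> = (case Phi (chi X) i 0 of None \<Rightarrow> None | Some e \<Rightarrow> Phi (join (Phi (chi X) i) (Phi (chi X) m)) e n)"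
    unfolding Afun_def using Jc_join[of X i m] by (simp add: chi_chr split: option.split)
  finally show "Phi (chi X) (appidx i m) n = (case Phi (chi X) i 0 of None \<Rightarrow> None | Some e \<Rightarrow> Phi (join (Phi (chi X) i) (Phi (chi X) m)) e n)" .
qed

definition gcan :: "nat \<Rightarrow> orc \<Rightarrow> nat \<Rightarrow> nat option" where
  "gcan d a w = Phi (\<lambda>n. Some (a n)) d (smn Dc w)"

lemma pc_gcan: "pc (gcan d)"
proof -
  have "pc (\<lambda>a w. Phi (\<lambda>n. Some (a n)) d (smn Dc w))" by (rule pc_pre[OF pc_fixed]) (intro rcI)+
  then show ?thesis unfolding gcan_def[abs_def] .
qed

definition J1 :: "orc \<Rightarrow> nat \<Rightarrow> nat option" where
  "J1 a w = Some (if smn (p1 ((p2 (p2 w) - 7) div 4)) (p1 w) = p2 (p2 w) then 0 else 1)"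

lemma pc_J1: "pc J1" unfolding J1_def[abs_def] by (rule pc_rc) (intro rcI zero_less_numeral)+

definition PPf :: "nat \<Rightarrow> orc \<Rightarrow> nat \<Rightarrow> nat option" where
  "PPf d a w = (case pmu J1 a w of None \<Rightarrow> None
     | Some j' \<Rightarrow> (case pmu (gcan d) a (appidx (p1 w) j') of None \<Rightarrow> None
     | Some cn \<Rightarrow> Some (smn (p1 ((p2 w - 7) div 4)) cn)))"

lemma pc_PPf: "pc (PPf d)"
proof -
  have g2: "pc (\<lambda>a w. pmu (gcan d) a (appidx (p1 (p2 w)) (p1 w)))"
    by (rule pc_pre[OF pc_pmu[OF pc_gcan]]) (unfold appidx_def, intro rcI)
  have g3: "pc (\<lambda>a w. Some (smn (p1 ((p2 (p2 (p2 w)) - 7) div 4)) (p1 w)))"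
    by (rule pc_rc) (intro rcI zero_less_numeral)+
  show ?thesis by (rule pc_cong[OF pc_bind[OF pc_pmu[OF pc_J1] pc_bind[OF g2 g3]]]) (simp add: PPf_def split: option.split)
qed

lemma backward:
  assumes "jump (jump X) \<le>\<^sub>T Y"
  shows "\<exists>f. pca_embedding (B_carrier X) B_app K1_carrier (K1_app Y) f"
proof -
  obtain d where d: "chi (jump (jump X)) = Phi (chi Y) d"
    using assms unfolding turing_le_def computable_in_def by blast
  obtain Pc where Pc: "\<And>a w. Phi (\<lambda>n. Some (a n)) Pc w = PPf d a w" using pc_code[OF pc_PPf] by blast
  let ?\<phi> = "Phi (chi X)"
  define ind where "ind \<psi> = (LEAST i. \<psi> = ?\<phi> i)" for \<psi>
  define f where "f \<psi> = smn Pc (ind \<psi>)" for \<psi>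
  have ind: "?\<phi> (ind \<psi>) = \<psi>" if "\<psi> \<in> B_carrier X" for \<psi>
  proof -
    from that obtain e where "\<psi> = ?\<phi> e" unfolding B_carrier_def computable_in_def by blast
    then have "\<psi> = ?\<phi> (LEAST i. \<psi> = ?\<phi> i)" by (rule LeastI)
    then show ?thesis unfolding ind_def by (rule sym)
  qed
  have ind_phi: "ind (?\<phi> i) = (LEAST k. ?\<phi> k = ?\<phi> i)" for i
    unfolding ind_def by (simp only: eq_commute[of "?\<phi> i"])
  have gY: "gcan d (chr Y) (pr k j) = Some (if ?\<phi> k = ?\<phi> j then 0 else 1)" for k j
  proof -
    have "gcan d (chr Y) (pr k j) = chi (jump (jump X)) (smn Dc (pr k j))"
      unfolding gcan_def d by (simp add: chi_chr)
    then show ?thesis by (simp add: chi_def D_jump)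
  qed
  have can: "pmu (gcan d) (chr Y) j = Some (LEAST k. ?\<phi> k = ?\<phi> j)" for j
    by (rule pmu_least[where P="\<lambda>k. ?\<phi> k = ?\<phi> j"]) (rule gY, rule refl)
  have J1Y: "pmu J1 (chr Y) (pr i (smn Pc j)) = Some j" for i j
  proof -
    have "J1 (chr Y) (pr k (pr i (smn Pc j))) = Some (if smn Pc k = smn Pc j then 0 else 1)" for k
      by (simp add: J1_def smn_p1)
    then have "pmu J1 (chr Y) (pr i (smn Pc j)) = Some (LEAST k. smn Pc k = smn Pc j)"
      by (rule pmu_least[where P="\<lambda>k. smn Pc k = smn Pc j"]) simp
    moreover have "(LEAST k. smn Pc k = smn Pc j) = j"
      by (rule Least_equality) (auto dest: smn_inj)
    ultimately show ?thesis by simp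
  qed
  have PY: "Phi (chi Y) (smn Pc i) (smn Pc j) = Some (smn Pc (LEAST k. ?\<phi> k = ?\<phi> (appidx i j)))" for i j
    by (simp add: Phi_smn chi_chr Pc PPf_def J1Y can smn_p1)
  have "pca_embedding (B_carrier X) B_app K1_carrier (K1_app Y) f"
    unfolding pca_embedding_def
  proof (intro conjI ballI allI impI)
    show "f ` B_carrier X \<subseteq> K1_carrier" by (simp add: K1_carrier_def)
  next
    show "inj_on f (B_carrier X)"
    proof (rule inj_onI)
      fix \<psi> \<chi> assume h: "\<psi> \<in> B_carrier X" "\<chi> \<in> B_carrier X" "f \<psi> = f \<chi>"
      have e: "ind \<psi> = ind \<chi>" using smn_inj[of Pc "ind \<psi>" Pc "ind \<chi>"] h(3) unfolding f_def by simp
      have "\<psi> = ?\<phi> (ind \<psi>)" using ind[OF h(1)] by (rule sym)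
      also have "\<dots> = ?\<phi> (ind \<chi>)" using e by (rule arg_cong)
      also have "\<dots> = \<chi>" by (rule ind[OF h(2)])
      finally show "\<psi> = \<chi>" .
    qed
  next
    fix \<psi> \<chi> c assume h: "\<psi> \<in> B_carrier X" "\<chi> \<in> B_carrier X" "B_app \<psi> \<chi> = Some c"
    let ?i = "ind \<psi>" and ?j = "ind \<chi>"
    have c: "c = ?\<phi> (appidx ?i ?j)"
      using h(3) unfolding B_app_def appidx_correct ind[OF h(1)] ind[OF h(2)] by simp
    have "K1_app Y (f \<psi>) (f \<chi>) = Some (smn Pc (LEAST k. ?\<phi> k = ?\<phi> (appidx ?i ?j)))"
      unfolding K1_app_def f_def by (rule PY)
    also have "\<dots> = Some (f c)" unfolding f_def c ind_phi ..
    finally show "K1_app Y (f \<psi>) (f \<chi>) = Some (f c)" .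
  qed
  then show ?thesis by blast
qed


theorem corollary6p19:
  fixes X Y :: "nat set"
  shows "(\<exists>f. pca_embedding (B_carrier X) B_app K1_carrier (K1_app Y) f)
         \<longleftrightarrow> jump (jump X) \<le>\<^sub>T Y"
  using forward backward by blast

end
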